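(* Let $U$ be a regular molecule. Then (1) if $U$ is acyclic, it is dimension-wise acyclic; (2) if $U$ is dimension-wise acyclic, it is frame-acyclic.
   Context: All posets are finite; $y$ covers $x$ if $x<y$ with nothing strictly between. A finite poset is graded if for each $x$ all maximal covering chains descending from $x$ have the same length $\dim x$; $U_n$ denotes elements of dimension $n$. An oriented graded poset is a finite graded poset with a label $\pm$ on each covering pair; $\Delta^\alpha x$ ($\nabla^\alpha x$) is the set of elements covered by (covering) $x$ with label $\alpha$. For closed (downward closed) $U$, with $\mathrm{cl}$ downward closure, $\max U$ maximal elements, $\dim U$ maximal dimension ($-1$ if empty): $\Delta^\alpha_nU=\{x\in U_n:\nabla^{-\alpha}x\cap U=\emptyset\}$, $\partial^\alpha_nU=\mathrm{cl}(\Delta^\alpha_nU)\cup\bigcup_{j<n}\mathrm{cl}((\max U)_j)$ ($\emptyset$ for $n<0$), $\partial_nU=\partial^-_nU\cup\partial^+_nU$, subscript omitted for $n=\dim U-1$; $\Delta^\alpha_kx:=\Delta^\alpha_k\mathrm{cl}\{x\}$. Maps are functions with $f(\partial^\alpha_n\mathrm{cl}\{x\})=\partial^\alpha_n\mathrm{cl}\{f(x)\}$; inclusions are injective maps. $U\#_kV$ is the pushout of $U\hookleftarrow\partial^+_kU\cong\partial^-_kV\hookrightarrow V$; for $U,V$ of equal dimension $n$ with $\partial U\cong\partial V$ compatibly with $\partial^\pm$, $U\Rightarrow V$ is that pushout with a new element $\top$ of dimension $n+1$, $\Delta^-\top=U_n$, $\Delta^+\top=V_n$. $U$ is round if $\partial^-_nU\cap\partial^+_nU=\partial_{n-1}U$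 for all $n<\dim U$. Regular molecules: smallest isomorphism-closed class containing the point, closed under $U\#_kV$ ($k<\min(\dim U,\dim V)$) and $U\Rightarrow V$ for round regular molecules of equal dimension. Submolecule inclusions: smallest class of inclusions of regular molecules containing isomorphisms and $U\hookrightarrow U\#_kV\hookleftarrow V$, closed under composition; $V\sqsubseteq U$ if $V$ is closed and its inclusion is a submolecule inclusion. The oriented Hasse diagram of $U$ has vertex set $U$ and an edge from $y$ to $x$ iff $y\in\Delta^-x$ or $x\in\Delta^+y$; $U$ is acyclic if this graph is acyclic. $\mathcal F_kU$ ($k$-flow graph): vertices $\bigcup_{i>k}U_i$, edge $x\to y$ iff $\Delta^+_kx\cap\Delta^-_ky\ne\emptyset$; $U$ is dimension-wise acyclic if $\mathcal F_kU$ is acyclic for all $k\in\mathbb N$. $\mathcal M_kU$: induced subgraph of $\mathcal F_kU$ on $\bigcup_{i>k}(\max U)_i$. $\mathrm{frdim}\,U$ is the dimension of $\bigcup\{\mathrm{cl}\{x\}\cap\mathrm{cl}\{y\}:x\ne y\in\max U\}$. $U$ is frame-acyclic if for all $V\sqsubseteq U$, $\mathcal M_{\mathrm{frdim}V}V$ is acyclic. *)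

theory Defs
  imports Main
begin

text \<open>An oriented graded poset over element type 'a: a carrier set, a partial order
  (as a set of pairs x \<le> y), and an orientation label on covering pairs:
  og_pos P x y = True means the covering pair (y covers x) is labelled +, False means -.
  The label is only meaningful on covering pairs.\<close>

record 'a ogp =
  og_elts :: "'a set"
  og_ord  :: "('a \<times> 'a) set"
  og_pos  :: "'a \<Rightarrow> 'a \<Rightarrow> bool"

definition og_lt :: "'a ogp \<Rightarrow> 'a \<Rightarrow> 'a \<Rightarrow> bool" where
  "og_lt P x y \<longleftrightarrow> (x, y) \<in> og_ord P \<and> x \<noteq> y"

definition og_covers :: "'a ogp \<Rightarrow> 'a \<Rightarrow> 'a \<Rightarrow> bool" where
  "og_covers P y x \<longleftrightarrow> og_lt P x y \<and> \<not> (\<exists>z. og_lt P x z \<and> og_lt P z y)"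

definition og_poset :: "'a ogp \<Rightarrow> bool" where
  "og_poset P \<longleftrightarrow> finite (og_elts P) \<and> og_ord P \<subseteq> og_elts P \<times> og_elts P
     \<and> (\<forall>x\<in>og_elts P. (x, x) \<in> og_ord P) \<and> antisym (og_ord P) \<and> trans (og_ord P)"

definition og_desc_chain :: "'a ogp \<Rightarrow> 'a \<Rightarrow> 'a list \<Rightarrow> bool" where
  "og_desc_chain P x c \<longleftrightarrow> c \<noteq> [] \<and> hd c = x
     \<and> (\<forall>i. Suc i < length c \<longrightarrow> og_covers P (c ! i) (c ! Suc i))
     \<and> \<not> (\<exists>z. og_lt P z (last c))"

definition og_graded :: "'a ogp \<Rightarrow> bool" where
  "og_graded P \<longleftrightarrow> (\<forall>x\<in>og_elts P. \<forall>c d. og_desc_chain P x c \<and> og_desc_chain P x d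
      \<longrightarrow> length c = length d)"

definition og_dim :: "'a ogp \<Rightarrow> 'a \<Rightarrow> int" where
  "og_dim P x = int (length (SOME c. og_desc_chain P x c)) - 1"

definition ogpos :: "'a ogp \<Rightarrow> bool" where
  "ogpos P \<longleftrightarrow> og_poset P \<and> og_graded P"

text \<open>Input (\<Delta>) and output (\<nabla>) of an element; a = True stands for +, False for -.\<close>
definition og_Delta :: "'a ogp \<Rightarrow> bool \<Rightarrow> 'a \<Rightarrow> 'a set" where
  "og_Delta P a x = {y. og_covers P x y \<and> og_pos P y x = a}"

definition og_Nabla :: "'a ogp \<Rightarrow> bool \<Rightarrow> 'a \<Rightarrow> 'a set" where
  "og_Nabla P a x = {y. og_covers P y x \<and> og_pos P x y = a}"

definition og_cl :: "'a ogp \<Rightarrow> 'a set \<Rightarrow> 'a set" where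
  "og_cl P U = {x \<in> og_elts P. \<exists>y\<in>U. (x, y) \<in> og_ord P}"

definition og_closed :: "'a ogp \<Rightarrow> 'a set \<Rightarrow> bool" where
  "og_closed P U \<longleftrightarrow> U \<subseteq> og_elts P \<and> og_cl P U = U"

definition og_max :: "'a ogp \<Rightarrow> 'a set \<Rightarrow> 'a set" where
  "og_max P U = {x \<in> U. \<not> (\<exists>y\<in>U. og_lt P x y)}"

definition og_setdim :: "'a ogp \<Rightarrow> 'a set \<Rightarrow> int" where
  "og_setdim P U = (if U = {} then -1 else Max (og_dim P ` U))"

definition og_layer :: "'a ogp \<Rightarrow> 'a set \<Rightarrow> int \<Rightarrow> 'a set" where
  "og_layer P U n = {x \<in> U. og_dim P x = n}"

definition og_Dn :: "'a ogp \<Rightarrow> bool \<Rightarrow> int \<Rightarrow> 'a set \<Rightarrow> 'a set" where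
  "og_Dn P a n U = {x \<in> og_layer P U n. og_Nabla P (\<not> a) x \<inter> U = {}}"

definition og_bdry :: "'a ogp \<Rightarrow> bool \<Rightarrow> int \<Rightarrow> 'a set \<Rightarrow> 'a set" where
  "og_bdry P a n U = (if n < 0 then {} else
      og_cl P (og_Dn P a n U) \<union> (\<Union>j\<in>{j. j < n}. og_cl P (og_layer P (og_max P U) j)))"

definition og_bdry2 :: "'a ogp \<Rightarrow> int \<Rightarrow> 'a set \<Rightarrow> 'a set" where
  "og_bdry2 P n U = og_bdry P False n U \<union> og_bdry P True n U"

definition og_bd :: "'a ogp \<Rightarrow> bool \<Rightarrow> 'a set \<Rightarrow> 'a set" where
  "og_bd P a U = og_bdry P a (og_setdim P U - 1) U"

definition og_round :: "'a ogp \<Rightarrow> 'a set \<Rightarrow> bool" where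
  "og_round P U \<longleftrightarrow> (\<forall>n. n < og_setdim P U \<longrightarrow>
      og_bdry P False n U \<inter> og_bdry P True n U = og_bdry2 P (n - 1) U)"

definition og_map :: "'a ogp \<Rightarrow> 'a ogp \<Rightarrow> ('a \<Rightarrow> 'a) \<Rightarrow> bool" where
  "og_map P Q f \<longleftrightarrow> f ` og_elts P \<subseteq> og_elts Q \<and>
     (\<forall>x\<in>og_elts P. \<forall>a n. f ` og_bdry P a n (og_cl P {x}) = og_bdry Q a n (og_cl Q {f x}))"

definition og_inclusion :: "'a ogp \<Rightarrow> 'a ogp \<Rightarrow> ('a \<Rightarrow> 'a) \<Rightarrow> bool" where
  "og_inclusion P Q f \<longleftrightarrow> og_map P Q f \<and> inj_on f (og_elts P)"

definition og_iso :: "'a ogp \<Rightarrow> 'a ogp \<Rightarrow> ('a \<Rightarrow> 'a) \<Rightarrow> bool" where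
  "og_iso P Q f \<longleftrightarrow> ogpos P \<and> ogpos Q \<and> bij_betw f (og_elts P) (og_elts Q)
     \<and> og_map P Q f \<and> og_map Q P (inv_into (og_elts P) f)"

definition og_restrict :: "'a ogp \<Rightarrow> 'a set \<Rightarrow> 'a ogp" where
  "og_restrict P V = \<lparr>og_elts = V, og_ord = og_ord P \<inter> (V \<times> V), og_pos = og_pos P\<rparr>"

text \<open>W is (a copy of) the pushout U #_k V of U <- \<partial>^+_k U \<cong> \<partial>^-_k V -> V, with the
  canonical inclusions i and j.\<close>
definition og_paste_via :: "nat \<Rightarrow> 'a ogp \<Rightarrow> 'a ogp \<Rightarrow> 'a ogp \<Rightarrow> ('a \<Rightarrow> 'a) \<Rightarrow> ('a \<Rightarrow> 'a) \<Rightarrow> bool" where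
  "og_paste_via k U V W i j \<longleftrightarrow> ogpos U \<and> ogpos V \<and> ogpos W
     \<and> og_inclusion U W i \<and> og_inclusion V W j
     \<and> og_elts W = i ` og_elts U \<union> j ` og_elts V
     \<and> i ` og_elts U \<inter> j ` og_elts V = i ` og_bdry U True (int k) (og_elts U)
     \<and> i ` og_bdry U True (int k) (og_elts U) = j ` og_bdry V False (int k) (og_elts V)"

text \<open>W is (a copy of) U \<Rightarrow> V: pushout of U <- \<partial>U \<cong> \<partial>V -> V (compatibly with \<partial>^\<pm>)
  together with a new top element t with \<Delta>^- t = U_n, \<Delta>^+ t = V_n.\<close>
definition og_rewrite_via :: "'a ogp \<Rightarrow> 'a ogp \<Rightarrow> 'a ogp \<Rightarrow> ('a \<Rightarrow> 'a) \<Rightarrow> ('a \<Rightarrow> 'a) \<Rightarrow> 'a \<Rightarrow> bool" where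
  "og_rewrite_via U V W i j t \<longleftrightarrow> ogpos U \<and> ogpos V \<and> ogpos W
     \<and> og_setdim U (og_elts U) = og_setdim V (og_elts V)
     \<and> og_inclusion U W i \<and> og_inclusion V W j
     \<and> t \<in> og_elts W \<and> t \<notin> i ` og_elts U \<union> j ` og_elts V
     \<and> og_elts W = i ` og_elts U \<union> j ` og_elts V \<union> {t}
     \<and> i ` og_elts U \<inter> j ` og_elts V = i ` og_bdry2 U (og_setdim U (og_elts U) - 1) (og_elts U)
     \<and> i ` og_bdry2 U (og_setdim U (og_elts U) - 1) (og_elts U)
         = j ` og_bdry2 V (og_setdim V (og_elts V) - 1) (og_elts V)
     \<and> (\<forall>a. i ` og_bd U a (og_elts U) = j ` og_bd V a (og_elts V))
     \<and> og_Delta W False t = i ` og_layer U (og_elts U) (og_setdim U (og_elts U))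
     \<and> og_Delta W True t = j ` og_layer V (og_elts V) (og_setdim V (og_elts V))"

inductive regmol :: "'a ogp \<Rightarrow> bool" where
  point: "ogpos P \<Longrightarrow> card (og_elts P) = 1 \<Longrightarrow> regmol P"
| iso: "regmol P \<Longrightarrow> og_iso P Q f \<Longrightarrow> regmol Q"
| paste: "regmol U \<Longrightarrow> regmol V \<Longrightarrow> int k < og_setdim U (og_elts U) \<Longrightarrow>
          int k < og_setdim V (og_elts V) \<Longrightarrow> og_paste_via k U V W i j \<Longrightarrow> regmol W"
| rewrite: "regmol U \<Longrightarrow> regmol V \<Longrightarrow> og_round U (og_elts U) \<Longrightarrow> og_round V (og_elts V) \<Longrightarrow>
          og_setdim U (og_elts U) = og_setdim V (og_elts V) \<Longrightarrow> og_rewrite_via U V W i j t \<Longrightarrow> regmol W"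

inductive subincl :: "('a \<Rightarrow> 'a) \<Rightarrow> 'a ogp \<Rightarrow> 'a ogp \<Rightarrow> bool" where
  iso: "regmol A \<Longrightarrow> regmol B \<Longrightarrow> og_iso A B f \<Longrightarrow> subincl f A B"
| pasteL: "regmol U \<Longrightarrow> regmol V \<Longrightarrow> regmol W \<Longrightarrow> og_paste_via k U V W i j \<Longrightarrow> subincl i U W"
| pasteR: "regmol U \<Longrightarrow> regmol V \<Longrightarrow> regmol W \<Longrightarrow> og_paste_via k U V W i j \<Longrightarrow> subincl j V W"
| comp: "subincl f A B \<Longrightarrow> subincl g B C \<Longrightarrow> subincl (g \<circ> f) A C"

text \<open>V \<sqsubseteq> U: V closed in U and its inclusion is a submolecule inclusion
  (functions are compared on the carrier only).\<close>
definition og_submol :: "'a set \<Rightarrow> 'a ogp \<Rightarrow> bool" where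
  "og_submol V U \<longleftrightarrow> og_closed U V \<and>
     (\<exists>g. subincl g (og_restrict U V) U \<and> (\<forall>x\<in>V. g x = x))"

definition og_hasse :: "'a ogp \<Rightarrow> ('a \<times> 'a) set" where
  "og_hasse P = {(y, x). x \<in> og_elts P \<and> y \<in> og_elts P \<and>
       (y \<in> og_Delta P False x \<or> x \<in> og_Delta P True y)}"

definition og_acyclic :: "'a ogp \<Rightarrow> bool" where
  "og_acyclic P \<longleftrightarrow> acyclic (og_hasse P)"

definition og_Dk :: "'a ogp \<Rightarrow> bool \<Rightarrow> int \<Rightarrow> 'a \<Rightarrow> 'a set" where
  "og_Dk P a k x = og_Dn P a k (og_cl P {x})"

definition og_flow :: "'a ogp \<Rightarrow> int \<Rightarrow> ('a \<times> 'a) set" where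
  "og_flow P k = {(x, y). x \<in> og_elts P \<and> y \<in> og_elts P \<and> og_dim P x > k \<and> og_dim P y > k
       \<and> og_Dk P True k x \<inter> og_Dk P False k y \<noteq> {}}"

definition og_dimwise_acyclic :: "'a ogp \<Rightarrow> bool" where
  "og_dimwise_acyclic P \<longleftrightarrow> (\<forall>k::nat. acyclic (og_flow P (int k)))"

definition og_mflow :: "'a ogp \<Rightarrow> int \<Rightarrow> ('a \<times> 'a) set" where
  "og_mflow P k = og_flow P k \<inter> (og_max P (og_elts P) \<times> og_max P (og_elts P))"

definition og_frdim :: "'a ogp \<Rightarrow> int" where
  "og_frdim P = og_setdim P (\<Union>{og_cl P {x} \<inter> og_cl P {y} | x y.
       x \<in> og_max P (og_elts P) \<and> y \<in> og_max P (og_elts P) \<and> x \<noteq> y})"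

definition og_frame_acyclic :: "'a ogp \<Rightarrow> bool" where
  "og_frame_acyclic U \<longleftrightarrow> (\<forall>V. og_submol V U \<longrightarrow>
       acyclic (og_mflow (og_restrict U V) (og_frdim (og_restrict U V))))"

end

theory Submission
  imports Defs
begin



lemma fin_max:
  assumes "finite S" "S \<noteq> {}" "\<And>a b c. R a b \<Longrightarrow> R b c \<Longrightarrow> R a c" "\<And>a. \<not> R a a"
  shows "\<exists>y\<in>S. \<forall>z\<in>S. \<not> R y z"
  using assms(1,2)
proof (induction S rule: finite_ne_induct)
  case (singleton x) then show ?case using assms(4) by auto
next
  case (insert x F)
  then obtain y where y: "y \<in> F" "\<forall>z\<in>F. \<not> R y z" by auto
  show ?case
  proof (cases "R y x")
    case True
    have "\<forall>z\<in>insert x F. \<not> R x z" using y True assms(3,4) by blast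
    then show ?thesis by blast
  next
    case False then show ?thesis using y by blast
  qed
qed

locale OG = fixes P :: "'a ogp" assumes og: "ogpos P"
begin

lemma fin: "finite (og_elts P)" using og by (simp add: ogpos_def og_poset_def)
lemma ord_elts: "(x,y) \<in> og_ord P \<Longrightarrow> x \<in> og_elts P \<and> y \<in> og_elts P"
  using og by (auto simp: ogpos_def og_poset_def)
lemma ord_refl: "x \<in> og_elts P \<Longrightarrow> (x,x) \<in> og_ord P"
  using og by (auto simp: ogpos_def og_poset_def)
lemma ord_trans: "(x,y) \<in> og_ord P \<Longrightarrow> (y,z) \<in> og_ord P \<Longrightarrow> (x,z) \<in> og_ord P"
  using og unfolding ogpos_def og_poset_def trans_def by blast
lemma ord_antisym: "(x,y) \<in> og_ord P \<Longrightarrow> (y,x) \<in> og_ord P \<Longrightarrow> x = y"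
  using og unfolding ogpos_def og_poset_def antisym_def by blast
lemma lt_trans: "og_lt P x y \<Longrightarrow> og_lt P y z \<Longrightarrow> og_lt P x z"
  unfolding og_lt_def using ord_trans ord_antisym by blast
lemma lt_irrefl: "\<not> og_lt P x x" unfolding og_lt_def by simp
lemma lt_elts: "og_lt P x y \<Longrightarrow> x \<in> og_elts P \<and> y \<in> og_elts P"
  unfolding og_lt_def using ord_elts by blast
lemma covers_lt: "og_covers P y x \<Longrightarrow> og_lt P x y" unfolding og_covers_def by simp


lemma chain_ex: "x \<in> og_elts P \<Longrightarrow> \<exists>c. og_desc_chain P x c"
proof (induction "card {w. og_lt P w x}" arbitrary: x rule: less_induct)
  case less
  show ?case
  proof (cases "\<exists>z. og_lt P z x")
    case False
    then show ?thesis by (intro exI[of _ "[x]"]) (auto simp: og_desc_chain_def)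
  next
    case True
    let ?S = "{w. og_lt P w x}"
    have finS: "finite ?S" using fin lt_elts by (auto intro: finite_subset)
    obtain y where y: "y \<in> ?S" "\<forall>z\<in>?S. \<not> og_lt P y z"
      using fin_max[OF finS, of "og_lt P"] True lt_trans lt_irrefl by blast
    have cov: "og_covers P x y" using y unfolding og_covers_def by auto
    have sub: "{w. og_lt P w y} \<subset> ?S" using y lt_trans lt_irrefl by auto
    have "card {w. og_lt P w y} < card ?S" using psubset_card_mono[OF finS sub] .
    moreover have "y \<in> og_elts P" using y lt_elts by auto
    ultimately obtain c where c: "og_desc_chain P y c" using less by blast
    have "og_desc_chain P x (x # c)"
      unfolding og_desc_chain_def
    proof (intro conjI allI impI)
      fix i assume "Suc i < length (x # c)"
      then show "og_covers P ((x # c) ! i) ((x # c) ! Suc i)"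
        using c cov unfolding og_desc_chain_def by (cases i) (auto simp: hd_conv_nth)
    qed (use c in \<open>auto simp: og_desc_chain_def\<close>)
    then show ?thesis by blast
  qed
qed

lemma graded: "x \<in> og_elts P \<Longrightarrow> og_desc_chain P x c \<Longrightarrow> og_desc_chain P x d \<Longrightarrow> length c = length d"
  using og unfolding ogpos_def og_graded_def by blast

lemma dim_chain: assumes "x \<in> og_elts P" "og_desc_chain P x c"
  shows "og_dim P x = int (length c) - 1"
proof -
  have "og_desc_chain P x (SOME c. og_desc_chain P x c)" using assms(2) by (rule someI)
  then show ?thesis unfolding og_dim_def using graded[OF assms(1) _ assms(2)] by metis
qed

lemma dim_nonneg: assumes "x \<in> og_elts P" shows "og_dim P x \<ge> 0"
proof -
  obtain c where c: "og_desc_chain P x c" using chain_ex assms by blast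
  then have "c \<noteq> []" by (simp add: og_desc_chain_def)
  then show ?thesis using dim_chain[OF assms c] by (cases c) auto
qed

lemma dim_cover: assumes "og_covers P y x" shows "og_dim P y = og_dim P x + 1"
proof -
  have xy: "x \<in> og_elts P" "y \<in> og_elts P" using lt_elts covers_lt assms by blast+
  obtain c where c: "og_desc_chain P x c" using chain_ex xy by blast
  have "og_desc_chain P y (y # c)"
    unfolding og_desc_chain_def
  proof (intro conjI allI impI)
    fix i assume "Suc i < length (y # c)"
    then show "og_covers P ((y # c) ! i) ((y # c) ! Suc i)"
      using c assms unfolding og_desc_chain_def by (cases i) (auto simp: hd_conv_nth)
  qed (use c in \<open>auto simp: og_desc_chain_def\<close>)
  then show ?thesis using dim_chain[OF xy(2)] dim_chain[OF xy(1) c] by simp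
qed

lemma dim_lt: "og_lt P x y \<Longrightarrow> og_dim P x < og_dim P y"
proof (induction "card {w. og_lt P w y}" arbitrary: y rule: less_induct)
  case less
  let ?S = "{w. og_lt P w y \<and> (x,w) \<in> og_ord P}"
  have finS: "finite ?S" using fin lt_elts by (auto intro: finite_subset)
  have "x \<in> ?S" using less.prems ord_refl lt_elts by auto
  then obtain w where w: "w \<in> ?S" "\<forall>z\<in>?S. \<not> og_lt P w z"
    using fin_max[OF finS, of "og_lt P"] lt_trans lt_irrefl by blast
  have cov: "og_covers P y w"
  proof -
    have "\<not> (og_lt P w z \<and> og_lt P z y)" for z
    proof
      assume z: "og_lt P w z \<and> og_lt P z y"
      then have "(x,z) \<in> og_ord P" using w ord_trans unfolding og_lt_def by blast
      then show False using w z by blast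
    qed
    then show ?thesis using w unfolding og_covers_def by blast
  qed
  show ?case
  proof (cases "w = x")
    case True then show ?thesis using dim_cover[OF cov] by simp
  next
    case False
    then have xw: "og_lt P x w" using w by (auto simp: og_lt_def)
    have finT: "finite {w. og_lt P w y}" using fin lt_elts by (auto intro: finite_subset)
    have sub: "{z. og_lt P z w} \<subset> {w. og_lt P w y}" using w lt_trans lt_irrefl by auto
    have "og_dim P x < og_dim P w" using less(1)[OF psubset_card_mono[OF finT sub] xw] .
    then show ?thesis using dim_cover[OF cov] by simp
  qed
qed

lemma dim_le: "(x,y) \<in> og_ord P \<Longrightarrow> og_dim P x \<le> og_dim P y"
  using dim_lt[of x y] unfolding og_lt_def by (cases "x = y") auto

lemma le_dim_eq: "(x,y) \<in> og_ord P \<Longrightarrow> og_dim P x = og_dim P y \<Longrightarrow> x = y"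
  using dim_lt[of x y] unfolding og_lt_def by force

lemma cover_of_dim: assumes "og_lt P x y" "og_dim P y = og_dim P x + 1" shows "og_covers P y x"
proof -
  have "\<not> (og_lt P x z \<and> og_lt P z y)" for z
    using dim_lt[of x z] dim_lt[of z y] assms(2) by linarith
  then show ?thesis unfolding og_covers_def using assms(1) by blast
qed

lemma max_above: assumes "x \<in> S" "S \<subseteq> og_elts P"
  shows "\<exists>m\<in>og_max P S. (x,m) \<in> og_ord P"
proof -
  let ?T = "{m \<in> S. (x,m) \<in> og_ord P}"
  have finT: "finite ?T" using fin assms(2) by (auto intro: finite_subset)
  have "x \<in> ?T" using assms ord_refl by auto
  then obtain m where m: "m \<in> ?T" "\<forall>z\<in>?T. \<not> og_lt P m z"
    using fin_max[OF finT, of "og_lt P"] lt_trans lt_irrefl by blast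
  have "\<not> og_lt P m z" if "z \<in> S" for z
  proof
    assume "og_lt P m z"
    then have "(x,z) \<in> og_ord P" using m ord_trans unfolding og_lt_def by blast
    then show False using m that \<open>og_lt P m z\<close> by blast
  qed
  then have "m \<in> og_max P S" unfolding og_max_def using m by blast
  then show ?thesis using m by blast
qed

lemma setdim_ge: "S \<subseteq> og_elts P \<Longrightarrow> x \<in> S \<Longrightarrow> og_dim P x \<le> og_setdim P S"
proof -
  assume a: "S \<subseteq> og_elts P" "x \<in> S"
  have "finite (og_dim P ` S)" using fin a(1) by (auto intro: finite_subset)
  then show ?thesis using a(2) unfolding og_setdim_def by auto
qed

lemma setdim_attained: "S \<subseteq> og_elts P \<Longrightarrow> S \<noteq> {} \<Longrightarrow> \<exists>x\<in>S. og_dim P x = og_setdim P S"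
proof -
  assume a: "S \<subseteq> og_elts P" "S \<noteq> {}"
  have "finite (og_dim P ` S)" using fin a(1) by (auto intro: finite_subset)
  then have "Max (og_dim P ` S) \<in> og_dim P ` S" using a(2) by (intro Max_in) auto
  then show ?thesis using a(2) unfolding og_setdim_def by auto
qed

end



definition dclosed :: "'a ogp \<Rightarrow> 'a set \<Rightarrow> bool" where
  "dclosed P S \<longleftrightarrow> S \<subseteq> og_elts P \<and> (\<forall>x y. (x,y) \<in> og_ord P \<and> y \<in> S \<longrightarrow> x \<in> S)"

context OG begin

lemma in_cl: "z \<in> og_cl P S \<longleftrightarrow> z \<in> og_elts P \<and> (\<exists>y\<in>S. (z,y) \<in> og_ord P)"
  by (simp add: og_cl_def)

lemma in_cl1: "z \<in> og_cl P {x} \<longleftrightarrow> (z,x) \<in> og_ord P"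
  using ord_elts by (auto simp: og_cl_def)

lemma cl_sub: "og_cl P S \<subseteq> og_elts P" by (auto simp: og_cl_def)

lemma cl_incl: "S \<subseteq> og_elts P \<Longrightarrow> S \<subseteq> og_cl P S"
  using ord_refl by (auto simp: og_cl_def)

lemma dclosed_cl: "dclosed P S \<Longrightarrow> og_cl P S = S"
proof -
  assume d: "dclosed P S"
  have "og_cl P S \<subseteq> S" using d unfolding dclosed_def og_cl_def by blast
  moreover have "S \<subseteq> og_cl P S" using d ord_refl unfolding dclosed_def og_cl_def by blast
  ultimately show ?thesis by blast
qed

lemma cl_dclosed: "dclosed P (og_cl P S)"
  unfolding dclosed_def
proof (intro conjI allI impI)
  show "og_cl P S \<subseteq> og_elts P" by (rule cl_sub)
  fix x y assume a: "(x, y) \<in> og_ord P \<and> y \<in> og_cl P S"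
  then obtain w where "w \<in> S" "(y,w) \<in> og_ord P" by (auto simp: in_cl)
  then show "x \<in> og_cl P S" using a ord_trans[of x y w] ord_elts[of x y] by (auto simp: in_cl)
qed

lemma dclosed_iff: "dclosed P S \<longleftrightarrow> og_closed P S"
proof
  assume "dclosed P S" then show "og_closed P S"
    unfolding og_closed_def using dclosed_cl by (simp add: dclosed_def)
next
  assume "og_closed P S" then show "dclosed P S"
    unfolding og_closed_def using cl_dclosed[of S] by simp
qed

lemma max_sub: "og_max P S \<subseteq> S" by (auto simp: og_max_def)

lemma in_max: "y \<in> og_max P S \<longleftrightarrow> y \<in> S \<and> (\<forall>z\<in>S. \<not> og_lt P y z)"
  by (auto simp: og_max_def)

lemma max_cl1: "x \<in> og_elts P \<Longrightarrow> og_max P (og_cl P {x}) = {x}"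
proof -
  assume x: "x \<in> og_elts P"
  have "y \<in> og_max P (og_cl P {x}) \<longleftrightarrow> y = x" for y
  proof
    assume "y \<in> og_max P (og_cl P {x})"
    then have "(y,x) \<in> og_ord P" "\<not> og_lt P y x" using in_cl1 ord_refl x by (auto simp: og_max_def)
    then show "y = x" by (auto simp: og_lt_def)
  next
    assume "y = x"
    then show "y \<in> og_max P (og_cl P {x})" using x ord_refl ord_antisym
      by (auto simp: og_max_def in_cl1 og_lt_def)
  qed
  then show ?thesis by blast
qed

lemma bdry_iff:
  assumes "n \<ge> 0"
  shows "z \<in> og_bdry P a n S \<longleftrightarrow> z \<in> og_elts P \<and> (\<exists>y\<in>S. (z,y) \<in> og_ord P \<and>
     ((og_dim P y = n \<and> og_Nabla P (\<not> a) y \<inter> S = {}) \<or> (y \<in> og_max P S \<and> og_dim P y < n)))"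
proof -
  have e: "og_bdry P a n S = og_cl P (og_Dn P a n S) \<union> (\<Union>j\<in>{j. j < n}. og_cl P (og_layer P (og_max P S) j))"
    using assms by (simp add: og_bdry_def)
  have 1: "z \<in> og_cl P (og_Dn P a n S) \<longleftrightarrow> z \<in> og_elts P \<and> (\<exists>y\<in>S. (z,y) \<in> og_ord P \<and>
     og_dim P y = n \<and> og_Nabla P (\<not> a) y \<inter> S = {})"
    unfolding og_cl_def og_Dn_def og_layer_def by blast
  have 2: "z \<in> (\<Union>j\<in>{j. j < n}. og_cl P (og_layer P (og_max P S) j)) \<longleftrightarrow>
     z \<in> og_elts P \<and> (\<exists>y\<in>S. (z,y) \<in> og_ord P \<and> y \<in> og_max P S \<and> og_dim P y < n)"
    unfolding og_cl_def og_layer_def og_max_def by blast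
  show ?thesis unfolding e Un_iff 1 2 by blast
qed

lemma bdry_neg: "n < 0 \<Longrightarrow> og_bdry P a n S = {}" by (simp add: og_bdry_def)

lemma bdry_sub_cl: "og_bdry P a n S \<subseteq> og_cl P S"
proof (cases "n < 0")
  case True then show ?thesis by (simp add: bdry_neg)
next
  case False then show ?thesis using bdry_iff[of n] by (auto simp: in_cl)
qed

lemma bdry_dim: assumes "S \<subseteq> og_elts P" "z \<in> og_bdry P a n S" shows "og_dim P z \<le> n"
proof (cases "n < 0")
  case True then show ?thesis using assms by (simp add: bdry_neg)
next
  case False
  then obtain y where "(z,y) \<in> og_ord P" "og_dim P y \<le> n" using assms(2) bdry_iff[of n] by force
  then show ?thesis using dim_le by fastforce
qed

lemma cl1_dim: "z \<in> og_cl P {x} \<Longrightarrow> og_dim P z \<le> og_dim P x"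
  using in_cl1 dim_le by blast

lemma bdry_big: assumes x: "x \<in> og_elts P" and n: "n > og_dim P x"
  shows "og_bdry P a n (og_cl P {x}) = og_cl P {x}"
proof -
  have n0: "n \<ge> 0" using n dim_nonneg[OF x] by linarith
  have "z \<in> og_bdry P a n (og_cl P {x}) \<longleftrightarrow> z \<in> og_cl P {x}" for z
  proof
    assume "z \<in> og_bdry P a n (og_cl P {x})"
    then have "z \<in> og_cl P (og_cl P {x})" using bdry_sub_cl by blast
    then show "z \<in> og_cl P {x}" using cl_dclosed[of "{x}"] dclosed_cl by simp
  next
    assume z: "z \<in> og_cl P {x}"
    have xm: "x \<in> og_max P (og_cl P {x})" using max_cl1 x by blast
    have xc: "x \<in> og_cl P {x}" using max_sub xm by blast
    have zx: "(z,x) \<in> og_ord P" using z in_cl1 by blast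
    have ze: "z \<in> og_elts P" using zx ord_elts by blast
    show "z \<in> og_bdry P a n (og_cl P {x})"
      unfolding bdry_iff[OF n0] using ze xc zx xm n by blast
  qed
  then show ?thesis by blast
qed

lemma Delta_iff_bdry:
  assumes y: "y \<in> og_elts P" and zd: "og_dim P z = og_dim P y - 1"
  shows "z \<in> og_bdry P a (og_dim P y - 1) (og_cl P {y}) \<longleftrightarrow> z \<in> og_Delta P a y"
proof
  assume zb: "z \<in> og_bdry P a (og_dim P y - 1) (og_cl P {y})"
  then have n0: "og_dim P y - 1 \<ge> 0" using bdry_neg by force
  from zb[unfolded bdry_iff[OF n0]] obtain w where w: "w \<in> og_cl P {y}" "(z,w) \<in> og_ord P"
     "(og_dim P w = og_dim P y - 1 \<and> og_Nabla P (\<not> a) w \<inter> og_cl P {y} = {})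
       \<or> (w \<in> og_max P (og_cl P {y}) \<and> og_dim P w < og_dim P y - 1)"
    by blast
  have wd: "og_dim P w = og_dim P y - 1" "og_Nabla P (\<not> a) w \<inter> og_cl P {y} = {}"
    using w(3) max_cl1[OF y] by auto
  have zw: "z = w" using le_dim_eq[OF w(2)] wd zd by simp
  have "(z,y) \<in> og_ord P" using w(1) zw in_cl1 by blast
  then have zy: "og_lt P z y" using zd by (auto simp: og_lt_def)
  have cov: "og_covers P y z" using cover_of_dim[OF zy] zd by simp
  have yc: "y \<in> og_cl P {y}" using in_cl1 ord_refl y by blast
  have "og_pos P z y = a"
  proof (rule ccontr)
    assume "og_pos P z y \<noteq> a"
    then have "y \<in> og_Nabla P (\<not> a) w" using cov zw by (auto simp: og_Nabla_def)
    then show False using wd(2) yc by blast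
  qed
  then show "z \<in> og_Delta P a y" using cov by (simp add: og_Delta_def)
next
  assume zD: "z \<in> og_Delta P a y"
  then have cov: "og_covers P y z" and lab: "og_pos P z y = a" by (auto simp: og_Delta_def)
  have ze: "z \<in> og_elts P" using covers_lt[OF cov] lt_elts by blast
  have n0: "og_dim P y - 1 \<ge> 0" using zd dim_nonneg[OF ze] by linarith
  have nab: "og_Nabla P (\<not> a) z \<inter> og_cl P {y} = {}"
  proof (rule ccontr)
    assume "og_Nabla P (\<not> a) z \<inter> og_cl P {y} \<noteq> {}"
    then obtain w where w: "og_covers P w z" "og_pos P z w = (\<not> a)" "(w,y) \<in> og_ord P"
      by (auto simp: og_Nabla_def in_cl1)
    have "og_dim P w = og_dim P y" using dim_cover[OF w(1)] zd by simp
    then have "w = y" using le_dim_eq w(3) by blast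
    then show False using w(2) lab by simp
  qed
  have zy: "(z,y) \<in> og_ord P" using covers_lt[OF cov] by (auto simp: og_lt_def)
  have zc: "z \<in> og_cl P {y}" using zy in_cl1 by blast
  have zz: "(z,z) \<in> og_ord P" using ord_refl ze by blast
  show "z \<in> og_bdry P a (og_dim P y - 1) (og_cl P {y})"
    unfolding bdry_iff[OF n0] using ze zc zz zd nab by blast
qed

end



locale INCL = P: OG P + Q: OG Q for P :: "'a ogp" and Q :: "'a ogp" and f +
  assumes inc: "og_inclusion P Q f"
begin

lemma f_elts: "x \<in> og_elts P \<Longrightarrow> f x \<in> og_elts Q"
  using inc by (auto simp: og_inclusion_def og_map_def)

lemma f_inj: "inj_on f (og_elts P)" using inc by (simp add: og_inclusion_def)

lemma f_bd: "x \<in> og_elts P \<Longrightarrow> f ` og_bdry P a n (og_cl P {x}) = og_bdry Q a n (og_cl Q {f x})"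
  using inc by (auto simp: og_inclusion_def og_map_def)

lemma f_cl1: assumes x: "x \<in> og_elts P" shows "f ` og_cl P {x} = og_cl Q {f x}"
proof -
  let ?n = "max (og_dim P x) (og_dim Q (f x)) + 1"
  have "f ` og_bdry P True ?n (og_cl P {x}) = og_bdry Q True ?n (og_cl Q {f x})" using f_bd[OF x] .
  moreover have "og_bdry P True ?n (og_cl P {x}) = og_cl P {x}" using P.bdry_big[OF x] by simp
  moreover have "og_bdry Q True ?n (og_cl Q {f x}) = og_cl Q {f x}" using Q.bdry_big[OF f_elts[OF x]] by simp
  ultimately show ?thesis by simp
qed

lemma f_ord: assumes "x \<in> og_elts P" "y \<in> og_elts P"
  shows "(f x, f y) \<in> og_ord Q \<longleftrightarrow> (x,y) \<in> og_ord P"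
proof
  assume "(f x, f y) \<in> og_ord Q"
  then have "f x \<in> f ` og_cl P {y}" using f_cl1[OF assms(2)] Q.in_cl1 by blast
  then obtain w where w: "w \<in> og_cl P {y}" "f x = f w" by blast
  have "w \<in> og_elts P" using w(1) P.cl_sub by blast
  then have "x = w" using w(2) f_inj assms(1) by (auto dest: inj_onD)
  then show "(x,y) \<in> og_ord P" using w(1) P.in_cl1 by blast
next
  assume "(x,y) \<in> og_ord P"
  then have "f x \<in> f ` og_cl P {y}" using P.in_cl1 by blast
  then show "(f x, f y) \<in> og_ord Q" using f_cl1[OF assms(2)] Q.in_cl1 by blast
qed

lemma f_below: assumes "x \<in> og_elts P" "(z', f x) \<in> og_ord Q"
  shows "\<exists>z\<in>og_elts P. z' = f z \<and> (z,x) \<in> og_ord P"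
proof -
  have "z' \<in> f ` og_cl P {x}" using f_cl1[OF assms(1)] Q.in_cl1 assms(2) by blast
  then show ?thesis using P.in_cl1 P.cl_sub by blast
qed

lemma f_eq: "x \<in> og_elts P \<Longrightarrow> y \<in> og_elts P \<Longrightarrow> f x = f y \<longleftrightarrow> x = y"
  using f_inj by (auto dest: inj_onD)

lemma f_lt: assumes "x \<in> og_elts P" "y \<in> og_elts P"
  shows "og_lt Q (f x) (f y) \<longleftrightarrow> og_lt P x y"
  using f_ord[OF assms] f_eq[OF assms] by (simp add: og_lt_def)

lemma f_covers: assumes x: "x \<in> og_elts P" and y: "y \<in> og_elts P"
  shows "og_covers Q (f y) (f x) \<longleftrightarrow> og_covers P y x"
proof
  assume c: "og_covers Q (f y) (f x)"
  have "\<not> (og_lt P x z \<and> og_lt P z y)" for z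
  proof
    assume z: "og_lt P x z \<and> og_lt P z y"
    then have ze: "z \<in> og_elts P" using P.lt_elts by blast
    then show False using c z f_lt[OF x ze] f_lt[OF ze y] unfolding og_covers_def by blast
  qed
  then show "og_covers P y x" using c f_lt[OF x y] unfolding og_covers_def by blast
next
  assume c: "og_covers P y x"
  have "\<not> (og_lt Q (f x) z' \<and> og_lt Q z' (f y))" for z'
  proof
    assume z: "og_lt Q (f x) z' \<and> og_lt Q z' (f y)"
    then obtain z where zz: "z \<in> og_elts P" "z' = f z" using f_below[OF y] by (auto simp: og_lt_def)
    then show False using c z f_lt[OF x zz(1)] f_lt[OF zz(1) y] unfolding og_covers_def by blast
  qed
  then show "og_covers Q (f y) (f x)" using c f_lt[OF x y] unfolding og_covers_def by blast
qed

lemma f_chain: assumes x: "x \<in> og_elts P" and c: "og_desc_chain P x c"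
  shows "og_desc_chain Q (f x) (map f c)"
proof -
  have ce: "c ! i \<in> og_elts P" if "i < length c" for i
  proof (cases i)
    case 0 then show ?thesis using c x by (auto simp: og_desc_chain_def hd_conv_nth)
  next
    case (Suc j)
    then have "og_covers P (c ! j) (c ! i)" using c that by (auto simp: og_desc_chain_def)
    then show ?thesis using P.covers_lt P.lt_elts by blast
  qed
  have cne: "c \<noteq> []" using c by (simp add: og_desc_chain_def)
  have le: "last c \<in> og_elts P" using ce[of "length c - 1"] cne by (simp add: last_conv_nth)
  have "\<not> og_lt Q z' (f (last c))" for z'
  proof
    assume z: "og_lt Q z' (f (last c))"
    then obtain z where zz: "z \<in> og_elts P" "z' = f z" using f_below[OF le] by (auto simp: og_lt_def)
    then have "og_lt P z (last c)" using z f_lt[OF zz(1) le] by simp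
    then show False using c by (auto simp: og_desc_chain_def)
  qed
  moreover have "og_covers Q (map f c ! i) (map f c ! Suc i)" if "Suc i < length (map f c)" for i
  proof -
    have i: "Suc i < length c" using that by simp
    have "og_covers P (c ! i) (c ! Suc i)" using c i unfolding og_desc_chain_def by blast
    then have "og_covers Q (f (c ! i)) (f (c ! Suc i))"
      using f_covers[OF ce[of "Suc i"] ce[of i]] i by simp
    then show ?thesis using i by simp
  qed
  moreover have "hd (map f c) = f x" using c cne by (simp add: og_desc_chain_def hd_map)
  moreover have "last (map f c) = f (last c)" using cne by (simp add: last_map)
  moreover have "map f c \<noteq> []" using cne by simp
  ultimately show ?thesis unfolding og_desc_chain_def by metis
qed

lemma f_dim: assumes x: "x \<in> og_elts P" shows "og_dim Q (f x) = og_dim P x"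
proof -
  obtain c where c: "og_desc_chain P x c" using P.chain_ex x by blast
  have 1: "og_dim P x = int (length c) - 1" using P.dim_chain[OF x c] .
  have 2: "og_dim Q (f x) = int (length (map f c)) - 1"
    using Q.dim_chain[OF f_elts[OF x] f_chain[OF x c]] .
  show ?thesis unfolding 1 2 by simp
qed

lemma f_Delta: assumes y: "y \<in> og_elts P" and z: "z \<in> og_Delta P a y"
  shows "f z \<in> og_Delta Q a (f y)"
proof -
  have cov: "og_covers P y z" using z by (simp add: og_Delta_def)
  have ze: "z \<in> og_elts P" using cov P.covers_lt P.lt_elts by blast
  have zd: "og_dim P z = og_dim P y - 1" using P.dim_cover[OF cov] by simp
  have "z \<in> og_bdry P a (og_dim P y - 1) (og_cl P {y})" using P.Delta_iff_bdry[OF y zd] z by blast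
  then have "f z \<in> f ` og_bdry P a (og_dim P y - 1) (og_cl P {y})" by (rule imageI)
  then have "f z \<in> og_bdry Q a (og_dim P y - 1) (og_cl Q {f y})" unfolding f_bd[OF y] .
  then have b: "f z \<in> og_bdry Q a (og_dim Q (f y) - 1) (og_cl Q {f y})" unfolding f_dim[OF y] .
  have zd': "og_dim Q (f z) = og_dim Q (f y) - 1" unfolding f_dim[OF y] f_dim[OF ze] by (rule zd)
  show ?thesis using Q.Delta_iff_bdry[OF f_elts[OF y] zd'] b by blast
qed

lemma f_pos: assumes y: "y \<in> og_elts P" and cov: "og_covers P y z"
  shows "og_pos Q (f z) (f y) = og_pos P z y"
proof -
  have "z \<in> og_Delta P (og_pos P z y) y" using cov by (simp add: og_Delta_def)
  then have "f z \<in> og_Delta Q (og_pos P z y) (f y)" by (rule f_Delta[OF y])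
  then show ?thesis by (simp add: og_Delta_def)
qed

lemma f_Nabla: assumes x: "x \<in> og_elts P" and S: "S \<subseteq> og_elts P"
  shows "og_Nabla Q b (f x) \<inter> f ` S = f ` (og_Nabla P b x \<inter> S)"
proof
  show "og_Nabla Q b (f x) \<inter> f ` S \<subseteq> f ` (og_Nabla P b x \<inter> S)"
  proof
    fix w' assume w': "w' \<in> og_Nabla Q b (f x) \<inter> f ` S"
    then obtain w where w: "w \<in> S" "w' = f w" by blast
    have we: "w \<in> og_elts P" using w S by blast
    have "og_covers Q (f w) (f x)" "og_pos Q (f x) (f w) = b" using w' w by (auto simp: og_Nabla_def)
    then have "og_covers P w x" "og_pos P x w = b" using f_covers[OF x we] f_pos[OF we] by auto
    then show "w' \<in> f ` (og_Nabla P b x \<inter> S)" using w by (auto simp: og_Nabla_def)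
  qed
next
  show "f ` (og_Nabla P b x \<inter> S) \<subseteq> og_Nabla Q b (f x) \<inter> f ` S"
  proof
    fix w' assume "w' \<in> f ` (og_Nabla P b x \<inter> S)"
    then obtain w where w: "w \<in> S" "w' = f w" "og_covers P w x" "og_pos P x w = b"
      by (auto simp: og_Nabla_def)
    have we: "w \<in> og_elts P" using w S by blast
    show "w' \<in> og_Nabla Q b (f x) \<inter> f ` S"
      using w f_covers[OF x we] f_pos[OF we] by (auto simp: og_Nabla_def)
  qed
qed

lemma f_Nabla_empty: assumes x: "x \<in> og_elts P" and S: "S \<subseteq> og_elts P"
  shows "og_Nabla Q b (f x) \<inter> f ` S = {} \<longleftrightarrow> og_Nabla P b x \<inter> S = {}"
  using f_Nabla[OF x S] by simp

lemma f_max: assumes S: "S \<subseteq> og_elts P"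
  shows "og_max Q (f ` S) = f ` og_max P S"
proof
  show "og_max Q (f ` S) \<subseteq> f ` og_max P S"
  proof
    fix y' assume y': "y' \<in> og_max Q (f ` S)"
    then obtain y where y: "y \<in> S" "y' = f y" by (auto simp: og_max_def)
    have ye: "y \<in> og_elts P" using y S by blast
    have "\<not> og_lt P y z" if "z \<in> S" for z
      using y' y that f_lt[OF ye, of z] S by (auto simp: og_max_def)
    then show "y' \<in> f ` og_max P S" using y by (auto simp: og_max_def)
  qed
next
  show "f ` og_max P S \<subseteq> og_max Q (f ` S)"
  proof
    fix y' assume "y' \<in> f ` og_max P S"
    then obtain y where y: "y \<in> og_max P S" "y' = f y" by blast
    have ye: "y \<in> og_elts P" using y S by (auto simp: og_max_def)
    have "\<not> og_lt Q y' z'" if "z' \<in> f ` S" for z'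
      using y that f_lt[OF ye] S by (auto simp: og_max_def)
    then show "y' \<in> og_max Q (f ` S)" using y by (auto simp: og_max_def)
  qed
qed

lemma f_bdry: assumes S: "S \<subseteq> og_elts P"
  shows "og_bdry Q a n (f ` S) = f ` og_bdry P a n S"
proof (cases "n < 0")
  case True then show ?thesis by (simp add: og_bdry_def)
next
  case False
  then have n0: "n \<ge> 0" by simp
  have cond: "((og_dim Q (f y) = n \<and> og_Nabla Q (\<not> a) (f y) \<inter> f ` S = {}) \<or> (f y \<in> og_max Q (f ` S) \<and> og_dim Q (f y) < n))
     \<longleftrightarrow> ((og_dim P y = n \<and> og_Nabla P (\<not> a) y \<inter> S = {}) \<or> (y \<in> og_max P S \<and> og_dim P y < n))"
    if y: "y \<in> S" for y
  proof -
    have ye: "y \<in> og_elts P" using y S by blast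
    have "f y \<in> og_max Q (f ` S) \<longleftrightarrow> y \<in> og_max P S"
      unfolding f_max[OF S] using f_inj S y P.max_sub[of S] by (auto dest: inj_onD)
    then show ?thesis using f_dim[OF ye] f_Nabla_empty[OF ye S] by simp
  qed
  show ?thesis
  proof
    show "og_bdry Q a n (f ` S) \<subseteq> f ` og_bdry P a n S"
    proof
      fix z' assume "z' \<in> og_bdry Q a n (f ` S)"
      then obtain y where y: "y \<in> S" "(z', f y) \<in> og_ord Q"
        "(og_dim Q (f y) = n \<and> og_Nabla Q (\<not> a) (f y) \<inter> f ` S = {}) \<or> (f y \<in> og_max Q (f ` S) \<and> og_dim Q (f y) < n)"
        unfolding Q.bdry_iff[OF n0] by blast
      have ye: "y \<in> og_elts P" using y S by blast
      obtain z where z: "z \<in> og_elts P" "z' = f z" "(z,y) \<in> og_ord P" using f_below[OF ye y(2)] by blast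
      have "z \<in> og_bdry P a n S" unfolding P.bdry_iff[OF n0] using z y cond[OF y(1)] by blast
      then show "z' \<in> f ` og_bdry P a n S" using z by blast
    qed
  next
    show "f ` og_bdry P a n S \<subseteq> og_bdry Q a n (f ` S)"
    proof
      fix z' assume "z' \<in> f ` og_bdry P a n S"
      then obtain z where z: "z' = f z" "z \<in> og_bdry P a n S" by blast
      then obtain y where y: "z \<in> og_elts P" "y \<in> S" "(z, y) \<in> og_ord P"
        "(og_dim P y = n \<and> og_Nabla P (\<not> a) y \<inter> S = {}) \<or> (y \<in> og_max P S \<and> og_dim P y < n)"
        unfolding P.bdry_iff[OF n0] by blast
      have ye: "y \<in> og_elts P" using y S by blast
      have "(f z, f y) \<in> og_ord Q" using f_ord[OF y(1) ye] y(3) by blast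
      then show "z' \<in> og_bdry Q a n (f ` S)" unfolding Q.bdry_iff[OF n0]
        using z y f_elts cond[OF y(2)] by blast
    qed
  qed
qed

lemma f_cl: assumes S: "S \<subseteq> og_elts P" shows "og_cl Q (f ` S) = f ` og_cl P S"
proof
  show "og_cl Q (f ` S) \<subseteq> f ` og_cl P S"
  proof
    fix z' assume "z' \<in> og_cl Q (f ` S)"
    then obtain y where y: "y \<in> S" "(z', f y) \<in> og_ord Q" by (auto simp: og_cl_def)
    obtain z where "z \<in> og_elts P" "z' = f z" "(z,y) \<in> og_ord P" using f_below y S by blast
    then show "z' \<in> f ` og_cl P S" using y by (auto simp: og_cl_def)
  qed
next
  show "f ` og_cl P S \<subseteq> og_cl Q (f ` S)"
  proof
    fix z' assume "z' \<in> f ` og_cl P S"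
    then obtain z y where "z' = f z" "z \<in> og_elts P" "y \<in> S" "(z,y) \<in> og_ord P" by (auto simp: og_cl_def)
    then show "z' \<in> og_cl Q (f ` S)" using f_ord[of z y] f_elts S by (auto simp: og_cl_def)
  qed
qed

lemma f_dclosed: "dclosed Q (f ` og_elts P)"
  unfolding dclosed_def
proof (intro conjI allI impI)
  show "f ` og_elts P \<subseteq> og_elts Q" using f_elts by blast
  fix x y assume a: "(x, y) \<in> og_ord Q \<and> y \<in> f ` og_elts P"
  then obtain y0 where "y0 \<in> og_elts P" "y = f y0" by blast
  then show "x \<in> f ` og_elts P" using f_below a by blast
qed

lemma f_setdim: assumes S: "S \<subseteq> og_elts P" shows "og_setdim Q (f ` S) = og_setdim P S"
proof -
  have "og_dim Q ` f ` S = og_dim P ` S"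
    using f_dim S by (force simp: image_image intro!: image_cong)
  then show ?thesis by (simp add: og_setdim_def)
qed

lemma f_hasse: assumes "(y, x) \<in> og_hasse P" shows "(f y, f x) \<in> og_hasse Q"
proof -
  have xy: "x \<in> og_elts P" "y \<in> og_elts P" using assms by (auto simp: og_hasse_def)
  have "y \<in> og_Delta P False x \<or> x \<in> og_Delta P True y" using assms by (auto simp: og_hasse_def)
  then have "f y \<in> og_Delta Q False (f x) \<or> f x \<in> og_Delta Q True (f y)" using f_Delta xy by blast
  then show ?thesis using f_elts xy by (auto simp: og_hasse_def)
qed

lemma f_hasse_rt: assumes "(x, z) \<in> (og_hasse P)\<^sup>*" shows "(f x, f z) \<in> (og_hasse Q)\<^sup>*"
  using assms
proof (induction rule: rtrancl_induct)
  case base then show ?case by simp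
next
  case (step y z)
  then show ?case using f_hasse[OF step(2)] by (meson rtrancl.rtrancl_into_rtrancl)
qed

end



definition Gr :: "'a ogp \<Rightarrow> bool \<Rightarrow> 'a set \<Rightarrow> int \<Rightarrow> bool" where
  "Gr Q a S n \<longleftrightarrow> (\<forall>z\<in>S. og_dim Q z < n \<and> og_Nabla Q (\<not> a) z \<inter> S = {} \<longrightarrow> z \<in> og_bdry Q a (n - 1) S)"

definition AtR :: "'a ogp \<Rightarrow> 'a set \<Rightarrow> bool" where
  "AtR Q S \<longleftrightarrow> (\<forall>x\<in>S. \<forall>z\<in>og_cl Q {x}.
     (og_Nabla Q False z \<inter> og_cl Q {x} = {} \<longrightarrow> (x,z) \<in> (og_hasse Q)\<^sup>*) \<and>
     (og_Nabla Q True z \<inter> og_cl Q {x} = {} \<longrightarrow> (z,x) \<in> (og_hasse Q)\<^sup>*))"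

context INCL begin

lemma Gr_transfer: assumes S: "S \<subseteq> og_elts P" and G: "Gr P a S n" shows "Gr Q a (f ` S) n"
  unfolding Gr_def
proof (intro ballI impI)
  fix z' assume z': "z' \<in> f ` S" and c: "og_dim Q z' < n \<and> og_Nabla Q (\<not> a) z' \<inter> f ` S = {}"
  then obtain z where z: "z \<in> S" "z' = f z" by blast
  have ze: "z \<in> og_elts P" using z S by blast
  have "og_dim P z < n" "og_Nabla P (\<not> a) z \<inter> S = {}"
    using c z f_dim[OF ze] f_Nabla_empty[OF ze S] by auto
  then have "z \<in> og_bdry P a (n - 1) S" using G z unfolding Gr_def by blast
  then show "z' \<in> og_bdry Q a (n - 1) (f ` S)" unfolding f_bdry[OF S] using z by blast
qed

lemma AtR_transfer: assumes S: "S \<subseteq> og_elts P" and A: "AtR P S" shows "AtR Q (f ` S)"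
  unfolding AtR_def
proof (intro ballI)
  fix x' z' assume x': "x' \<in> f ` S" and z': "z' \<in> og_cl Q {x'}"
  then obtain x where x: "x \<in> S" "x' = f x" by blast
  have xe: "x \<in> og_elts P" using x S by blast
  have cl: "og_cl Q {x'} = f ` og_cl P {x}" using f_cl1[OF xe] x by simp
  then obtain z where z: "z \<in> og_cl P {x}" "z' = f z" using z' by blast
  have ze: "z \<in> og_elts P" using z P.cl_sub by blast
  have e: "og_Nabla Q b z' \<inter> og_cl Q {x'} = {} \<longleftrightarrow> og_Nabla P b z \<inter> og_cl P {x} = {}" for b
    unfolding cl z(2) using f_Nabla_empty[OF ze P.cl_sub] .
  have A1: "og_Nabla P False z \<inter> og_cl P {x} = {} \<longrightarrow> (x,z) \<in> (og_hasse P)\<^sup>*"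
   and A2: "og_Nabla P True z \<inter> og_cl P {x} = {} \<longrightarrow> (z,x) \<in> (og_hasse P)\<^sup>*"
    using A x z unfolding AtR_def by blast+
  show "(og_Nabla Q False z' \<inter> og_cl Q {x'} = {} \<longrightarrow> (x', z') \<in> (og_hasse Q)\<^sup>*) \<and>
        (og_Nabla Q True z' \<inter> og_cl Q {x'} = {} \<longrightarrow> (z', x') \<in> (og_hasse Q)\<^sup>*)"
    unfolding e using A1 A2 f_hasse_rt x z by blast
qed

end

lemma iso_INCL: "og_iso P Q f \<Longrightarrow> INCL P Q f"
  unfolding og_iso_def INCL_def INCL_axioms_def OG_def og_inclusion_def bij_betw_def by blast

lemma iso_img: "og_iso P Q f \<Longrightarrow> f ` og_elts P = og_elts Q"
  unfolding og_iso_def bij_betw_def by blast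




locale RW = OG Q for Q :: "'a ogp" +
  fixes I J t n
  assumes dI: "dclosed Q I" and dJ: "dclosed Q J"
    and t: "t \<in> og_elts Q" "t \<notin> I" "t \<notin> J"
    and elts: "og_elts Q = I \<union> J \<union> {t}"
    and nI: "n = og_setdim Q I" and nJ: "n = og_setdim Q J" and Ine: "I \<noteq> {}"
    and bd: "\<And>a. og_bdry Q a (n - 1) I = og_bdry Q a (n - 1) J"
    and DtF: "og_Delta Q False t = og_layer Q I n"
    and DtT: "og_Delta Q True t = og_layer Q J n"
    and pureI: "\<And>x. x \<in> I \<Longrightarrow> \<exists>m\<in>I. (x,m) \<in> og_ord Q \<and> og_dim Q m = n"
    and pureJ: "\<And>x. x \<in> J \<Longrightarrow> \<exists>m\<in>J. (x,m) \<in> og_ord Q \<and> og_dim Q m = n"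
    and GI: "\<And>a. Gr Q a I n" and GJ: "\<And>a. Gr Q a J n"
    and AI: "AtR Q I" and AJ: "AtR Q J"
begin

lemma I_sub: "I \<subseteq> og_elts Q" using dI by (simp add: dclosed_def)
lemma J_sub: "J \<subseteq> og_elts Q" using dJ by (simp add: dclosed_def)

lemma dimI: "x \<in> I \<Longrightarrow> og_dim Q x \<le> n" using setdim_ge[OF I_sub] nI by simp
lemma dimJ: "x \<in> J \<Longrightarrow> og_dim Q x \<le> n" using setdim_ge[OF J_sub] nJ by simp

lemma layI: "m \<in> I \<Longrightarrow> og_dim Q m = n \<Longrightarrow> og_covers Q t m \<and> og_pos Q m t = False"
proof -
  assume "m \<in> I" "og_dim Q m = n"
  then have "m \<in> og_Delta Q False t" unfolding DtF og_layer_def by simp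
  then show ?thesis by (simp add: og_Delta_def)
qed

lemma layJ: "m \<in> J \<Longrightarrow> og_dim Q m = n \<Longrightarrow> og_covers Q t m \<and> og_pos Q m t = True"
proof -
  assume "m \<in> J" "og_dim Q m = n"
  then have "m \<in> og_Delta Q True t" unfolding DtT og_layer_def by simp
  then show ?thesis by (simp add: og_Delta_def)
qed

lemma dim_t: "og_dim Q t = n + 1"
proof -
  obtain m where "m \<in> I" "og_dim Q m = og_setdim Q I" using setdim_attained[OF I_sub Ine] by blast
  then show ?thesis using layI[of m] dim_cover nI by auto
qed

lemma n0: "n \<ge> 0"
proof -
  obtain m where "m \<in> I" "og_dim Q m = og_setdim Q I" using setdim_attained[OF I_sub Ine] by blast
  then show ?thesis using dim_nonneg I_sub nI by force
qed

lemma below_t: assumes x: "x \<in> og_elts Q" shows "(x, t) \<in> og_ord Q"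
proof -
  consider "x = t" | "x \<in> I" | "x \<in> J" using x elts by blast
  then show ?thesis
  proof cases
    case 1 then show ?thesis using ord_refl t by simp
  next
    case 2
    then obtain m where m: "m \<in> I" "(x,m) \<in> og_ord Q" "og_dim Q m = n" using pureI by blast
    then have "(m,t) \<in> og_ord Q" using layI covers_lt by (auto simp: og_lt_def)
    then show ?thesis using m ord_trans by blast
  next
    case 3
    then obtain m where m: "m \<in> J" "(x,m) \<in> og_ord Q" "og_dim Q m = n" using pureJ by blast
    then have "(m,t) \<in> og_ord Q" using layJ covers_lt by (auto simp: og_lt_def)
    then show ?thesis using m ord_trans by blast
  qed
qed

lemma setdim_Q: "og_setdim Q (og_elts Q) = n + 1"
proof -
  have "og_dim Q x \<le> n + 1" if "x \<in> og_elts Q" for x using dim_le[OF below_t[OF that]] dim_t by simp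
  moreover obtain x where "x \<in> og_elts Q" "og_dim Q x = og_setdim Q (og_elts Q)"
    using setdim_attained[of "og_elts Q"] t by blast
  ultimately show ?thesis using setdim_ge[of "og_elts Q" t] t dim_t by force
qed

lemma cl_t: "og_cl Q {t} = og_elts Q"
  using below_t in_cl1 cl_sub by blast

lemma top_cofaces: assumes m: "m \<in> I \<union> J" "og_dim Q m = n" and w: "og_covers Q w m" shows "w = t"
proof -
  have "og_dim Q w = n + 1" using dim_cover[OF w] m by simp
  moreover have "w \<in> og_elts Q" using w covers_lt lt_elts by blast
  ultimately show ?thesis using elts dimI dimJ by fastforce
qed

lemma NabJ: assumes "m \<in> J" "og_dim Q m = n" shows "og_Nabla Q False m = {}"
  using top_cofaces[of m] layJ[OF assms] assms by (auto simp: og_Nabla_def)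

lemma NabI: assumes "m \<in> I" "og_dim Q m = n" shows "og_Nabla Q True m = {}"
  using top_cofaces[of m] layI[OF assms] assms by (auto simp: og_Nabla_def)

lemma Kp: assumes z: "z \<in> og_elts Q" "z \<noteq> t" and nab: "og_Nabla Q False z \<inter> og_elts Q = {}"
  shows "z \<in> J"
proof (rule ccontr)
  assume zJ: "z \<notin> J"
  then have zI: "z \<in> I" using z elts by blast
  have "og_dim Q z \<noteq> n"
  proof
    assume "og_dim Q z = n"
    then have "t \<in> og_Nabla Q False z" using layI[OF zI] by (simp add: og_Nabla_def)
    then show False using nab t by blast
  qed
  then have "og_dim Q z < n" using dimI[OF zI] by simp
  moreover have "og_Nabla Q (\<not> True) z \<inter> I = {}" using nab I_sub by auto
  ultimately have "z \<in> og_bdry Q True (n - 1) I" using GI[of True] zI unfolding Gr_def by blast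
  then have "z \<in> og_cl Q J" using bd bdry_sub_cl by blast
  then show False using zJ dclosed_cl[OF dJ] by simp
qed

lemma Km: assumes z: "z \<in> og_elts Q" "z \<noteq> t" and nab: "og_Nabla Q True z \<inter> og_elts Q = {}"
  shows "z \<in> I"
proof (rule ccontr)
  assume zI: "z \<notin> I"
  then have zJ: "z \<in> J" using z elts by blast
  have "og_dim Q z \<noteq> n"
  proof
    assume "og_dim Q z = n"
    then have "t \<in> og_Nabla Q True z" using layJ[OF zJ] by (simp add: og_Nabla_def)
    then show False using nab t by blast
  qed
  then have "og_dim Q z < n" using dimJ[OF zJ] by simp
  moreover have "og_Nabla Q (\<not> False) z \<inter> J = {}" using nab J_sub by auto
  ultimately have "z \<in> og_bdry Q False (n - 1) J" using GJ[of False] zJ unfolding Gr_def by blast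
  then have "z \<in> og_cl Q I" using bd bdry_sub_cl by blast
  then show False using zI dclosed_cl[OF dI] by simp
qed

lemma AtR_Q: "AtR Q (og_elts Q)"
  unfolding AtR_def
proof (intro ballI)
  fix x z assume x: "x \<in> og_elts Q" and z: "z \<in> og_cl Q {x}"
  consider "x \<in> I" | "x \<in> J" | "x = t" using x elts by blast
  then show "(og_Nabla Q False z \<inter> og_cl Q {x} = {} \<longrightarrow> (x, z) \<in> (og_hasse Q)\<^sup>*) \<and>
             (og_Nabla Q True z \<inter> og_cl Q {x} = {} \<longrightarrow> (z, x) \<in> (og_hasse Q)\<^sup>*)"
  proof cases
    case 1 then show ?thesis using AI z unfolding AtR_def by blast
  next
    case 2 then show ?thesis using AJ z unfolding AtR_def by blast
  next
    case 3
    have ze: "z \<in> og_elts Q" using z cl_sub by blast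
    show ?thesis unfolding 3 cl_t
    proof (intro conjI impI)
      assume nab: "og_Nabla Q False z \<inter> og_elts Q = {}"
      show "(t, z) \<in> (og_hasse Q)\<^sup>*"
      proof (cases "z = t")
        case True then show ?thesis by simp
      next
        case False
        then have zJ: "z \<in> J" using Kp ze nab by blast
        obtain m where m: "m \<in> J" "(z,m) \<in> og_ord Q" "og_dim Q m = n" using pureJ[OF zJ] by blast
        have zm: "z \<in> og_cl Q {m}" using m in_cl1 by blast
        have "og_Nabla Q False z \<inter> og_cl Q {m} = {}" using nab cl_sub by blast
        then have p: "(m, z) \<in> (og_hasse Q)\<^sup>*" using AJ m(1) zm unfolding AtR_def by blast
        have "m \<in> og_Delta Q True t" using layJ[OF m(1) m(3)] by (simp add: og_Delta_def)
        then have "(t, m) \<in> og_hasse Q" using t m(1) J_sub by (auto simp: og_hasse_def)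
        then show ?thesis using p by (meson converse_rtrancl_into_rtrancl)
      qed
    next
      assume nab: "og_Nabla Q True z \<inter> og_elts Q = {}"
      show "(z, t) \<in> (og_hasse Q)\<^sup>*"
      proof (cases "z = t")
        case True then show ?thesis by simp
      next
        case False
        then have zI: "z \<in> I" using Km ze nab by blast
        obtain m where m: "m \<in> I" "(z,m) \<in> og_ord Q" "og_dim Q m = n" using pureI[OF zI] by blast
        have zm: "z \<in> og_cl Q {m}" using m in_cl1 by blast
        have "og_Nabla Q True z \<inter> og_cl Q {m} = {}" using nab cl_sub by blast
        then have p: "(z, m) \<in> (og_hasse Q)\<^sup>*" using AI m(1) zm unfolding AtR_def by blast
        have "m \<in> og_Delta Q False t" using layI[OF m(1) m(3)] by (simp add: og_Delta_def)
        then have "(m, t) \<in> og_hasse Q" using t m(1) I_sub by (auto simp: og_hasse_def)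
        then show ?thesis using p by (meson rtrancl.rtrancl_into_rtrancl)
      qed
    qed
  qed
qed

lemma Gr_Q: "Gr Q a (og_elts Q) (og_setdim Q (og_elts Q))"
  unfolding Gr_def setdim_Q
proof (intro ballI impI)
  fix z assume ze: "z \<in> og_elts Q" and c: "og_dim Q z < n + 1 \<and> og_Nabla Q (\<not> a) z \<inter> og_elts Q = {}"
  have zt: "z \<noteq> t" using c dim_t by auto
  have nn: "n + 1 - 1 = n" by simp
  show "z \<in> og_bdry Q a (n + 1 - 1) (og_elts Q)"
    unfolding nn bdry_iff[OF n0]
  proof (cases a)
    case True
    then have zJ: "z \<in> J" using Kp ze zt c by simp
    obtain m where m: "m \<in> J" "(z,m) \<in> og_ord Q" "og_dim Q m = n" using pureJ[OF zJ] by blast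
    have "og_Nabla Q (\<not> a) m \<inter> og_elts Q = {}" using NabJ[OF m(1) m(3)] True by simp
    then show "z \<in> og_elts Q \<and> (\<exists>y\<in>og_elts Q. (z, y) \<in> og_ord Q \<and>
       (og_dim Q y = n \<and> og_Nabla Q (\<not> a) y \<inter> og_elts Q = {} \<or> y \<in> og_max Q (og_elts Q) \<and> og_dim Q y < n))"
      using ze m J_sub by blast
  next
    case False
    then have zI: "z \<in> I" using Km ze zt c by simp
    obtain m where m: "m \<in> I" "(z,m) \<in> og_ord Q" "og_dim Q m = n" using pureI[OF zI] by blast
    have "og_Nabla Q (\<not> a) m \<inter> og_elts Q = {}" using NabI[OF m(1) m(3)] False by simp
    then show "z \<in> og_elts Q \<and> (\<exists>y\<in>og_elts Q. (z, y) \<in> og_ord Q \<and>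
       (og_dim Q y = n \<and> og_Nabla Q (\<not> a) y \<inter> og_elts Q = {} \<or> y \<in> og_max Q (og_elts Q) \<and> og_dim Q y < n))"
      using ze m I_sub by blast
  qed
qed

end



context OG begin

definition Wit :: "bool \<Rightarrow> int \<Rightarrow> 'a \<Rightarrow> bool" where
  "Wit a N y \<longleftrightarrow> y \<in> og_elts P \<and> ((og_dim P y = N - 1 \<and> og_Nabla P (\<not> a) y \<inter> og_elts P = {})
      \<or> (y \<in> og_max P (og_elts P) \<and> og_dim P y < N - 1))"

lemma Wit_bdry: assumes N: "N \<ge> 1" and z: "z \<in> og_elts P" and zy: "(z,y) \<in> og_ord P" and W: "Wit a N y"
  shows "z \<in> og_bdry P a (N - 1) (og_elts P)"
proof -
  have n0: "N - 1 \<ge> 0" using N by simp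
  show ?thesis unfolding bdry_iff[OF n0] using z zy W unfolding Wit_def by blast
qed

lemma max_nab: "y \<in> og_max P S \<Longrightarrow> og_Nabla P b y \<inter> S = {}"
  unfolding og_max_def og_Nabla_def og_covers_def by blast

lemma Wit_max: assumes "y \<in> og_max P (og_elts P)" "og_dim P y < N" shows "Wit a N y"
proof -
  have "y \<in> og_elts P" using assms max_sub by blast
  moreover have "og_Nabla P (\<not> a) y \<inter> og_elts P = {}" using max_nab assms by blast
  ultimately show ?thesis unfolding Wit_def using assms by force
qed

lemma max_side: assumes dY: "dclosed P Y" and el: "og_elts P = X \<union> Y"
  and y: "y \<in> og_max P X" "y \<notin> Y" shows "y \<in> og_max P (og_elts P)"
proof -
  have "\<not> og_lt P y z" if z: "z \<in> og_elts P" for z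
  proof
    assume yz: "og_lt P y z"
    show False
    proof (cases "z \<in> Y")
      case True
      then have "y \<in> Y" using dY yz unfolding dclosed_def og_lt_def by blast
      then show False using y by blast
    next
      case False
      then have "z \<in> X" using z el by blast
      then show False using y yz by (auto simp: og_max_def)
    qed
  qed
  moreover have "y \<in> og_elts P" using y el max_sub by blast
  ultimately show ?thesis by (auto simp: og_max_def)
qed

lemma max_both: assumes el: "og_elts P = X \<union> Y" and y: "y \<in> og_max P X" "y \<in> og_max P Y"
  shows "y \<in> og_max P (og_elts P)"
  using y el by (auto simp: og_max_def)

lemma lacks_side: assumes dY: "dclosed P Y" and el: "og_elts P = X \<union> Y"
  and y: "y \<notin> Y" and l: "og_Nabla P b y \<inter> X = {}" shows "og_Nabla P b y \<inter> og_elts P = {}"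
proof -
  have "w \<notin> og_Nabla P b y" if w: "w \<in> og_elts P" for w
  proof
    assume wn: "w \<in> og_Nabla P b y"
    then have yw: "(y, w) \<in> og_ord P" by (auto simp: og_Nabla_def og_covers_def og_lt_def)
    show False
    proof (cases "w \<in> Y")
      case True then have "y \<in> Y" using dY yw unfolding dclosed_def by blast
      then show False using y by blast
    next
      case False then show False using w el l wn by blast
    qed
  qed
  then show ?thesis by blast
qed

lemma side: assumes dX: "dclosed P X" and dY: "dclosed P Y" and el: "og_elts P = X \<union> Y"
  and N: "N = og_setdim P (og_elts P)"
  and y: "y \<in> X" "y \<notin> Y"
  and c: "(og_dim P y = og_setdim P X - 1 \<and> og_Nabla P (\<not> a) y \<inter> X = {}) \<or>
          (y \<in> og_max P X \<and> og_dim P y < og_setdim P X - 1)"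
  shows "\<exists>w. (y,w) \<in> og_ord P \<and> Wit a N w"
proof -
  have Xs: "X \<subseteq> og_elts P" using dX by (simp add: dclosed_def)
  have nX: "og_setdim P X \<le> N"
  proof -
    obtain x where "x \<in> X" "og_dim P x = og_setdim P X" using setdim_attained[OF Xs] y by blast
    then show ?thesis using setdim_ge[of "og_elts P" x] Xs N by auto
  qed
  have ye: "y \<in> og_elts P" using y Xs by blast
  from c show ?thesis
  proof
    assume c1: "og_dim P y = og_setdim P X - 1 \<and> og_Nabla P (\<not> a) y \<inter> X = {}"
    then have l: "og_Nabla P (\<not> a) y \<inter> og_elts P = {}" using lacks_side[OF dY el y(2)] by blast
    show ?thesis
    proof (cases "og_setdim P X = N")
      case True
      then have "Wit a N y" unfolding Wit_def using ye c1 l by simp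
      then show ?thesis using ord_refl ye by blast
    next
      case False
      obtain u where u: "u \<in> og_max P X" "(y,u) \<in> og_ord P" using max_above[OF y(1) Xs] by blast
      have "u \<notin> Y" using u y dY unfolding dclosed_def by blast
      then have um: "u \<in> og_max P (og_elts P)" using max_side[OF dY el u(1)] by blast
      have "og_dim P u \<le> og_setdim P X" using setdim_ge[OF Xs] u max_sub by blast
      then have "og_dim P u < N" using False nX by simp
      then show ?thesis using Wit_max[OF um] u by blast
    qed
  next
    assume c2: "y \<in> og_max P X \<and> og_dim P y < og_setdim P X - 1"
    then have "y \<in> og_max P (og_elts P)" using max_side[OF dY el _ y(2)] by blast
    then have "Wit a N y" using Wit_max c2 nX by force
    then show ?thesis using ord_refl ye by blast
  qed
qed

lemma side_case: assumes dX: "dclosed P X" and dY: "dclosed P Y" and el: "og_elts P = X \<union> Y"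
  and N: "N = og_setdim P (og_elts P)"
  and G: "Gr P a X (og_setdim P X)"
  and z: "z \<in> X" "z \<notin> Y" and zd: "og_dim P z < N" and l: "og_Nabla P (\<not> a) z \<inter> X = {}"
  shows "\<exists>w. (z,w) \<in> og_ord P \<and> Wit a N w"
proof -
  have Xs: "X \<subseteq> og_elts P" using dX by (simp add: dclosed_def)
  have ze: "z \<in> og_elts P" using z Xs by blast
  show ?thesis
  proof (cases "og_dim P z < og_setdim P X")
    case False
    then have "og_dim P z = og_setdim P X" using setdim_ge[OF Xs z(1)] by simp
    then have "z \<in> og_max P X" using dim_lt setdim_ge[OF Xs] unfolding og_max_def
      using z(1) by fastforce
    then have "z \<in> og_max P (og_elts P)" using max_side[OF dY el _ z(2)] by blast
    then show ?thesis using Wit_max zd ord_refl ze by blast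
  next
    case True
    then have zb: "z \<in> og_bdry P a (og_setdim P X - 1) X" using G z l unfolding Gr_def by blast
    have n0: "og_setdim P X - 1 \<ge> 0" using True dim_nonneg[OF ze] by simp
    from zb[unfolded bdry_iff[OF n0]] obtain y where y: "y \<in> X" "(z,y) \<in> og_ord P"
      "(og_dim P y = og_setdim P X - 1 \<and> og_Nabla P (\<not> a) y \<inter> X = {}) \<or>
       (y \<in> og_max P X \<and> og_dim P y < og_setdim P X - 1)" by blast
    have "y \<notin> Y" using y z dY unfolding dclosed_def by blast
    then obtain w where "(y,w) \<in> og_ord P" "Wit a N w" using side[OF dX dY el N y(1) _ y(3)] by blast
    then show ?thesis using y(2) ord_trans by blast
  qed
qed

end

locale PS = OG Q for Q :: "'a ogp" +
  fixes I J k a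
  assumes dI: "dclosed Q I" and dJ: "dclosed Q J" and el: "og_elts Q = I \<union> J"
    and k0: "k \<ge> 0"
    and BI: "I \<inter> J = og_bdry Q a k I" and BJ: "I \<inter> J = og_bdry Q (\<not> a) k J"
    and kI: "k < og_setdim Q I" and kJ: "k < og_setdim Q J"
    and GI: "Gr Q a I (og_setdim Q I)" and GJ: "Gr Q a J (og_setdim Q J)"
begin

abbreviation "N \<equiv> og_setdim Q (og_elts Q)"
abbreviation "nI \<equiv> og_setdim Q I"
abbreviation "nJ \<equiv> og_setdim Q J"

lemma Is: "I \<subseteq> og_elts Q" using dI by (simp add: dclosed_def)
lemma Js: "J \<subseteq> og_elts Q" using dJ by (simp add: dclosed_def)
lemma Ine: "I \<noteq> {}" using kI k0 by (auto simp: og_setdim_def)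
lemma Jne: "J \<noteq> {}" using kJ k0 by (auto simp: og_setdim_def)

lemma nI_le: "nI \<le> N"
proof -
  obtain x where "x \<in> I" "og_dim Q x = nI" using setdim_attained[OF Is Ine] by blast
  then show ?thesis using setdim_ge[of "og_elts Q" x] Is by auto
qed

lemma nJ_le: "nJ \<le> N"
proof -
  obtain x where "x \<in> J" "og_dim Q x = nJ" using setdim_attained[OF Js Jne] by blast
  then show ?thesis using setdim_ge[of "og_elts Q" x] Js by auto
qed

lemma N_cases: "nI = N \<or> nJ = N"
proof -
  obtain x where x: "x \<in> og_elts Q" "og_dim Q x = N" using setdim_attained[of "og_elts Q"] Ine Is by blast
  then consider "x \<in> I" | "x \<in> J" using el by blast
  then show ?thesis
  proof cases
    case 1 then show ?thesis using setdim_ge[OF Is] x nI_le by force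
  next
    case 2 then show ?thesis using setdim_ge[OF Js] x nJ_le by force
  qed
qed

lemma N1: "N \<ge> 1" using k0 kI nI_le by simp

lemma HB_dim: "y \<in> I \<inter> J \<Longrightarrow> og_dim Q y \<le> k"
  using bdry_dim[OF Is] BI by blast

lemma HB_dimk: assumes y: "y \<in> I \<inter> J" "og_dim Q y = k" shows "og_Nabla Q (\<not> a) y \<inter> I = {}"
proof -
  have "y \<in> og_bdry Q a k I" using y BI by blast
  then obtain c where c: "c \<in> I" "(y,c) \<in> og_ord Q"
    "(og_dim Q c = k \<and> og_Nabla Q (\<not> a) c \<inter> I = {}) \<or> (c \<in> og_max Q I \<and> og_dim Q c < k)"
    unfolding bdry_iff[OF k0] by blast
  have "og_dim Q c = k \<and> og_Nabla Q (\<not> a) c \<inter> I = {}" using c y dim_le[OF c(2)] by auto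
  moreover then have "y = c" using le_dim_eq[OF c(2)] y by simp
  ultimately show ?thesis by simp
qed

lemma HB_low: assumes y: "y \<in> I \<inter> J" "y \<in> og_max Q J" "og_dim Q y < k" shows "y \<in> og_max Q I"
proof -
  have "y \<in> og_bdry Q a k I" using y BI by blast
  then obtain c where c: "c \<in> I" "(y,c) \<in> og_ord Q"
    "(og_dim Q c = k \<and> og_Nabla Q (\<not> a) c \<inter> I = {}) \<or> (c \<in> og_max Q I \<and> og_dim Q c < k)"
    unfolding bdry_iff[OF k0] by blast
  have ce: "c \<in> og_elts Q" using c Is by blast
  have "c \<in> og_bdry Q a k I" unfolding bdry_iff[OF k0] using c ce ord_refl by blast
  then have cJ: "c \<in> J" using BI by blast
  have "y = c"
  proof (rule ccontr)
    assume "y \<noteq> c"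
    then have "og_lt Q y c" using c by (simp add: og_lt_def)
    then show False using y(2) cJ by (auto simp: og_max_def)
  qed
  then show ?thesis using c y by auto
qed

lemma lacks_both: "og_Nabla Q b y \<inter> I = {} \<Longrightarrow> og_Nabla Q b y \<inter> J = {} \<Longrightarrow> og_Nabla Q b y \<inter> og_elts Q = {}"
  using el by blast

lemma C2c: assumes y: "y \<in> I \<inter> J" "y \<in> og_max Q J" "og_dim Q y = k"
  shows "\<exists>w. (y,w) \<in> og_ord Q \<and> Wit a N w"
proof -
  have ye: "y \<in> og_elts Q" using y Is by blast
  have lI: "og_Nabla Q (\<not> a) y \<inter> I = {}" using HB_dimk y by blast
  have lJ: "og_Nabla Q (\<not> a) y \<inter> J = {}" using max_nab y(2) by blast
  have l: "og_Nabla Q (\<not> a) y \<inter> og_elts Q = {}" using lacks_both[OF lI lJ] .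
  have "y \<in> og_bdry Q a (nI - 1) I" using GI y lI kI unfolding Gr_def by auto
  moreover have n0: "nI - 1 \<ge> 0" using kI k0 by simp
  ultimately obtain y' where y': "y' \<in> I" "(y,y') \<in> og_ord Q"
    "(og_dim Q y' = nI - 1 \<and> og_Nabla Q (\<not> a) y' \<inter> I = {}) \<or> (y' \<in> og_max Q I \<and> og_dim Q y' < nI - 1)"
    unfolding bdry_iff[OF n0] by blast
  show ?thesis
  proof (cases "y' \<in> J")
    case False
    obtain w where "(y',w) \<in> og_ord Q" "Wit a N w" using side[OF dI dJ el refl y'(1) False y'(3)] by blast
    then show ?thesis using y'(2) ord_trans by blast
  next
    case True
    have yy: "y' = y"
    proof (rule ccontr)
      assume "y' \<noteq> y"
      then have "og_lt Q y y'" using y' by (simp add: og_lt_def)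
      then show False using y(2) True by (auto simp: og_max_def)
    qed
    from y'(3)[unfolded yy] show ?thesis
    proof
      assume c2: "y \<in> og_max Q I \<and> og_dim Q y < nI - 1"
      then have "y \<in> og_max Q (og_elts Q)" using max_both[OF el] y by blast
      then have "Wit a N y" using Wit_max c2 nI_le by force
      then show ?thesis using ord_refl ye by blast
    next
      assume c1: "og_dim Q y = nI - 1 \<and> og_Nabla Q (\<not> a) y \<inter> I = {}"
      show ?thesis
      proof (cases "nI = N")
        case True
        then have "Wit a N y" unfolding Wit_def using ye c1 l by simp
        then show ?thesis using ord_refl ye by blast
      next
        case False
        then have nlt: "nI < N" using nI_le by simp
        obtain u where u: "u \<in> og_max Q I" "(y,u) \<in> og_ord Q" using max_above[of y I] y Is by blast
        have uI: "u \<in> I" using u max_sub by blast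
        have ud: "og_dim Q u \<le> nI" using setdim_ge[OF Is uI] .
        show ?thesis
        proof (cases "u \<in> J")
          case True
          have "og_dim Q u \<le> k" using HB_dim uI True by blast
          then have "u = y" using le_dim_eq[OF u(2)] dim_le[OF u(2)] y(3) by simp
          then have "y \<in> og_max Q (og_elts Q)" using max_both[OF el] u y by blast
          then have "Wit a N y" using Wit_max y(3) kI nI_le by force
          then show ?thesis using ord_refl ye by blast
        next
          case False
          then have "u \<in> og_max Q (og_elts Q)" using max_side[OF dJ el u(1)] by blast
          then have "Wit a N u" using Wit_max ud nlt by force
          then show ?thesis using u(2) by blast
        qed
      qed
    qed
  qed
qed

lemma Gr_paste: "Gr Q a (og_elts Q) N"
  unfolding Gr_def
proof (intro ballI impI)
  fix z assume ze: "z \<in> og_elts Q" and c: "og_dim Q z < N \<and> og_Nabla Q (\<not> a) z \<inter> og_elts Q = {}"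
  have lI: "og_Nabla Q (\<not> a) z \<inter> I = {}" and lJ: "og_Nabla Q (\<not> a) z \<inter> J = {}" using c el by blast+
  have "\<exists>w. (z,w) \<in> og_ord Q \<and> Wit a N w"
  proof (cases "z \<in> J")
    case False
    then have "z \<in> I" using ze el by blast
    then show ?thesis using side_case[OF dI dJ el refl GI _ False _ lI] c by blast
  next
    case zJ: True
    show ?thesis
    proof (cases "z \<in> I")
      case False
      have el': "og_elts Q = J \<union> I" using el by blast
      show ?thesis using side_case[OF dJ dI el' refl GJ zJ False _ lJ] c by blast
    next
      case zI: True
      have "og_dim Q z \<le> k" using HB_dim zI zJ by blast
      then have "z \<in> og_bdry Q a (nJ - 1) J" using GJ zJ lJ kJ unfolding Gr_def by auto
      moreover have n0: "nJ - 1 \<ge> 0" using kJ k0 by simp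
      ultimately obtain y where y: "y \<in> J" "(z,y) \<in> og_ord Q"
        "(og_dim Q y = nJ - 1 \<and> og_Nabla Q (\<not> a) y \<inter> J = {}) \<or> (y \<in> og_max Q J \<and> og_dim Q y < nJ - 1)"
        unfolding bdry_iff[OF n0] by blast
      have ye: "y \<in> og_elts Q" using y Js by blast
      have "\<exists>w. (y,w) \<in> og_ord Q \<and> Wit a N w"
      proof (cases "y \<in> I")
        case False
        have el': "og_elts Q = J \<union> I" using el by blast
        show ?thesis using side[OF dJ dI el' refl y(1) False y(3)] by blast
      next
        case yI: True
        have yk: "og_dim Q y \<le> k" using HB_dim yI y(1) by blast
        from y(3) show ?thesis
        proof
          assume c1: "og_dim Q y = nJ - 1 \<and> og_Nabla Q (\<not> a) y \<inter> J = {}"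
          then have yk': "og_dim Q y = k" using yk kJ by simp
          have l: "og_Nabla Q (\<not> a) y \<inter> og_elts Q = {}"
            using lacks_both[OF HB_dimk[OF _ yk'] ] c1 yI y(1) by blast
          show ?thesis
          proof (cases "nJ = N")
            case True
            then have "Wit a N y" unfolding Wit_def using ye c1 l by simp
            then show ?thesis using ord_refl ye by blast
          next
            case False
            then have nlt: "nJ < N" using nJ_le by simp
            obtain v where v: "v \<in> og_max Q J" "(y,v) \<in> og_ord Q" using max_above[of y J] y Js by blast
            have vJ: "v \<in> J" using v max_sub by blast
            show ?thesis
            proof (cases "v \<in> I")
              case True
              have "og_dim Q v \<le> k" using HB_dim vJ True by blast
              then have "v = y" using le_dim_eq[OF v(2)] dim_le[OF v(2)] yk' by simp
              then show ?thesis using C2c[of y] yI y(1) v(1) yk' by blast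
            next
              case False
              have el': "og_elts Q = J \<union> I" using el by blast
              have "v \<in> og_max Q (og_elts Q)" using max_side[OF dI el' v(1) False] .
              moreover have "og_dim Q v \<le> nJ" using setdim_ge[OF Js vJ] .
              ultimately have "Wit a N v" using Wit_max nlt by force
              then show ?thesis using v(2) by blast
            qed
          qed
        next
          assume c2: "y \<in> og_max Q J \<and> og_dim Q y < nJ - 1"
          show ?thesis
          proof (cases "og_dim Q y < k")
            case True
            then have "y \<in> og_max Q I" using HB_low yI y(1) c2 by blast
            then have "y \<in> og_max Q (og_elts Q)" using max_both[OF el] c2 by blast
            then have "Wit a N y" using Wit_max c2 nJ_le by force
            then show ?thesis using ord_refl ye by blast
          next
            case False
            then show ?thesis using C2c[of y] yI y(1) c2 yk by force
          qed
        qed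
      qed
      then show ?thesis using y(2) ord_trans by blast
    qed
  qed
  then obtain w where "(z,w) \<in> og_ord Q" "Wit a N w" by blast
  then show "z \<in> og_bdry Q a (N - 1) (og_elts Q)" using Wit_bdry[OF N1 ze] by blast
qed

end




context INCL begin

lemma f_layer: assumes S: "S \<subseteq> og_elts P" shows "og_layer Q (f ` S) n = f ` og_layer P S n"
  using S f_dim by (auto simp: og_layer_def)

lemma f_Dn: assumes S: "S \<subseteq> og_elts P" shows "og_Dn Q a n (f ` S) = f ` og_Dn P a n S"
proof
  show "og_Dn Q a n (f ` S) \<subseteq> f ` og_Dn P a n S"
  proof
    fix z' assume z': "z' \<in> og_Dn Q a n (f ` S)"
    then obtain z where z: "z \<in> S" "z' = f z" by (auto simp: og_Dn_def og_layer_def)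
    have ze: "z \<in> og_elts P" using z S by blast
    have "z \<in> og_Dn P a n S" using z' z f_dim[OF ze] f_Nabla_empty[OF ze S]
      by (auto simp: og_Dn_def og_layer_def)
    then show "z' \<in> f ` og_Dn P a n S" using z by blast
  qed
next
  show "f ` og_Dn P a n S \<subseteq> og_Dn Q a n (f ` S)"
  proof
    fix z' assume "z' \<in> f ` og_Dn P a n S"
    then obtain z where z: "z \<in> og_Dn P a n S" "z' = f z" by blast
    have zS: "z \<in> S" using z by (auto simp: og_Dn_def og_layer_def)
    have ze: "z \<in> og_elts P" using zS S by blast
    show "z' \<in> og_Dn Q a n (f ` S)" using z zS f_dim[OF ze] f_Nabla_empty[OF ze S]
      by (auto simp: og_Dn_def og_layer_def)
  qed
qed

end

lemma regmol_ogpos: "regmol X \<Longrightarrow> ogpos X"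
  by (induction rule: regmol.induct)
     (auto simp: og_iso_def og_paste_via_def og_rewrite_via_def)

lemma round_pure:
  assumes og: "ogpos U" and r: "og_round U (og_elts U)" and x: "x \<in> og_elts U"
  shows "\<exists>m\<in>og_elts U. (x,m) \<in> og_ord U \<and> og_dim U m = og_setdim U (og_elts U)"
proof -
  interpret OG U using og by (simp add: OG_def)
  obtain m where m: "m \<in> og_max U (og_elts U)" "(x,m) \<in> og_ord U" using max_above[OF x] by blast
  have me: "m \<in> og_elts U" using m max_sub by blast
  have le: "og_dim U m \<le> og_setdim U (og_elts U)" using setdim_ge me by blast
  have "\<not> og_dim U m < og_setdim U (og_elts U)"
  proof
    assume lt: "og_dim U m < og_setdim U (og_elts U)"
    let ?j = "og_dim U m"
    have j0: "?j \<ge> 0" using dim_nonneg[OF me] .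
    have inb: "m \<in> og_bdry U b ?j (og_elts U)" for b
      unfolding bdry_iff[OF j0] using me ord_refl max_nab[OF m(1)] by blast
    have "m \<in> og_bdry2 U (?j - 1) (og_elts U)"
      using r lt inb[of False] inb[of True] unfolding og_round_def by blast
    then have "og_dim U m \<le> ?j - 1" using bdry_dim[of "og_elts U"] unfolding og_bdry2_def by blast
    then show False by simp
  qed
  then show ?thesis using m me le by force
qed

definition Inv :: "'a ogp \<Rightarrow> bool" where
  "Inv X \<longleftrightarrow> ogpos X \<and> og_elts X \<noteq> {} \<and> (\<forall>a. Gr X a (og_elts X) (og_setdim X (og_elts X)))
     \<and> AtR X (og_elts X)"

lemma AtR_Un: "AtR Q S \<Longrightarrow> AtR Q T \<Longrightarrow> AtR Q (S \<union> T)"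
  unfolding AtR_def by blast

lemma Inv_point: assumes og: "ogpos P" and c: "card (og_elts P) = 1" shows "Inv P"
proof -
  interpret OG P using og by (simp add: OG_def)
  obtain p where p: "og_elts P = {p}" using c card_1_singletonE by blast
  have sd: "og_setdim P {p} = og_dim P p" by (simp add: og_setdim_def)
  have G: "Gr P a (og_elts P) (og_setdim P (og_elts P))" for a
    unfolding Gr_def p sd by simp
  have "og_cl P {p} = {p}" using p cl_sub cl_incl by blast
  then have A: "AtR P (og_elts P)" unfolding AtR_def p by simp
  show ?thesis unfolding Inv_def using og p G A by blast
qed

lemma Inv_iso: assumes I: "Inv P" and f: "og_iso P Q f" shows "Inv Q"
proof -
  interpret INCL P Q f using iso_INCL[OF f] .
  have e: "f ` og_elts P = og_elts Q" using iso_img[OF f] .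
  have G: "Gr Q a (og_elts Q) (og_setdim Q (og_elts Q))" for a
    using Gr_transfer[of "og_elts P" a] I f_setdim[of "og_elts P"] unfolding e Inv_def by simp
  have A: "AtR Q (og_elts Q)" using AtR_transfer[of "og_elts P"] I unfolding e Inv_def by simp
  show ?thesis unfolding Inv_def using Q.og G A e I unfolding Inv_def by blast
qed

lemma Inv_paste:
  assumes IU: "Inv U" and IV: "Inv V" and kU: "int k < og_setdim U (og_elts U)"
    and kV: "int k < og_setdim V (og_elts V)" and pv: "og_paste_via k U V W i j"
  shows "Inv W"
proof -
  have ogs: "ogpos U" "ogpos V" "ogpos W" using pv by (auto simp: og_paste_via_def)
  interpret Ui: INCL U W i using pv ogs by (simp add: og_paste_via_def INCL_def INCL_axioms_def OG_def)
  interpret Vj: INCL V W j using pv ogs by (simp add: og_paste_via_def INCL_def INCL_axioms_def OG_def)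
  let ?I = "i ` og_elts U" and ?J = "j ` og_elts V"
  have el: "og_elts W = ?I \<union> ?J" using pv by (simp add: og_paste_via_def)
  have BI: "?I \<inter> ?J = og_bdry W True (int k) ?I"
    using pv Ui.f_bdry[of "og_elts U" True "int k"] by (simp add: og_paste_via_def)
  have BJ: "?I \<inter> ?J = og_bdry W False (int k) ?J"
    using pv Vj.f_bdry[of "og_elts V" False "int k"] by (simp add: og_paste_via_def)
  have sI: "og_setdim W ?I = og_setdim U (og_elts U)" using Ui.f_setdim by simp
  have sJ: "og_setdim W ?J = og_setdim V (og_elts V)" using Vj.f_setdim by simp
  have GI: "Gr W a ?I (og_setdim W ?I)" for a using Ui.Gr_transfer[of "og_elts U" a] IU sI
    unfolding Inv_def by simp
  have GJ: "Gr W a ?J (og_setdim W ?J)" for a using Vj.Gr_transfer[of "og_elts V" a] IV sJ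
    unfolding Inv_def by simp
  interpret T: PS W ?I ?J "int k" True
    unfolding PS_def PS_axioms_def OG_def
    using ogs Ui.f_dclosed Vj.f_dclosed el BI BJ kU kV sI sJ GI GJ by simp
  interpret F: PS W ?J ?I "int k" False
    unfolding PS_def PS_axioms_def OG_def
    using ogs Ui.f_dclosed Vj.f_dclosed el BI BJ kU kV sI sJ GI GJ by (simp add: Un_commute Int_commute)
  have A: "AtR W (og_elts W)"
    unfolding el using AtR_Un Ui.AtR_transfer[of "og_elts U"] Vj.AtR_transfer[of "og_elts V"] IU IV
    unfolding Inv_def by blast
  have G: "Gr W a (og_elts W) (og_setdim W (og_elts W))" for a
    using T.Gr_paste F.Gr_paste by (cases a) auto
  have "og_elts W \<noteq> {}" using el IU unfolding Inv_def by blast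
  then show ?thesis unfolding Inv_def using ogs A G by blast
qed

lemma Inv_rewrite:
  assumes IU: "Inv U" and IV: "Inv V" and rU: "og_round U (og_elts U)" and rV: "og_round V (og_elts V)"
    and eq: "og_setdim U (og_elts U) = og_setdim V (og_elts V)" and rw: "og_rewrite_via U V W i j t"
  shows "Inv W"
proof -
  have ogs: "ogpos U" "ogpos V" "ogpos W" using rw by (auto simp: og_rewrite_via_def)
  interpret Ui: INCL U W i using rw ogs by (simp add: og_rewrite_via_def INCL_def INCL_axioms_def OG_def)
  interpret Vj: INCL V W j using rw ogs by (simp add: og_rewrite_via_def INCL_def INCL_axioms_def OG_def)
  let ?I = "i ` og_elts U" and ?J = "j ` og_elts V" and ?n = "og_setdim U (og_elts U)"
  have sI: "og_setdim W ?I = ?n" using Ui.f_setdim by simp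
  have sJ: "og_setdim W ?J = ?n" using Vj.f_setdim eq by simp
  have bd: "og_bdry W a (?n - 1) ?I = og_bdry W a (?n - 1) ?J" for a
  proof -
    have "i ` og_bd U a (og_elts U) = j ` og_bd V a (og_elts V)" using rw by (simp add: og_rewrite_via_def)
    then show ?thesis using Ui.f_bdry[of "og_elts U" a] Vj.f_bdry[of "og_elts V" a] eq
      by (simp add: og_bd_def)
  qed
  have DtF: "og_Delta W False t = og_layer W ?I ?n"
    using rw Ui.f_layer[of "og_elts U"] by (simp add: og_rewrite_via_def)
  have DtT: "og_Delta W True t = og_layer W ?J ?n"
    using rw Vj.f_layer[of "og_elts V"] eq by (simp add: og_rewrite_via_def)
  have pureI: "\<exists>m\<in>?I. (x,m) \<in> og_ord W \<and> og_dim W m = ?n" if xI: "x \<in> ?I" for x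
  proof -
    obtain x0 where x0: "x0 \<in> og_elts U" "x = i x0" using xI by blast
    obtain m where m: "m \<in> og_elts U" "(x0,m) \<in> og_ord U" "og_dim U m = ?n"
      using round_pure[OF ogs(1) rU x0(1)] by blast
    have "(i x0, i m) \<in> og_ord W" using Ui.f_ord[OF x0(1) m(1)] m(2) by blast
    moreover have "og_dim W (i m) = ?n" using Ui.f_dim[OF m(1)] m(3) by simp
    ultimately show ?thesis using m(1) x0(2) by blast
  qed
  have pureJ: "\<exists>m\<in>?J. (x,m) \<in> og_ord W \<and> og_dim W m = ?n" if xJ: "x \<in> ?J" for x
  proof -
    obtain x0 where x0: "x0 \<in> og_elts V" "x = j x0" using xJ by blast
    obtain m where m: "m \<in> og_elts V" "(x0,m) \<in> og_ord V" "og_dim V m = og_setdim V (og_elts V)"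
      using round_pure[OF ogs(2) rV x0(1)] by blast
    have "(j x0, j m) \<in> og_ord W" using Vj.f_ord[OF x0(1) m(1)] m(2) by blast
    moreover have "og_dim W (j m) = ?n" using Vj.f_dim[OF m(1)] m(3) eq by simp
    ultimately show ?thesis using m(1) x0(2) by blast
  qed
  have GI: "Gr W a ?I ?n" for a using Ui.Gr_transfer[of "og_elts U" a] IU unfolding Inv_def by simp
  have GJ: "Gr W a ?J ?n" for a using Vj.Gr_transfer[of "og_elts V" a] IV eq unfolding Inv_def by simp
  have AI: "AtR W ?I" using Ui.AtR_transfer[of "og_elts U"] IU unfolding Inv_def by simp
  have AJ: "AtR W ?J" using Vj.AtR_transfer[of "og_elts V"] IV unfolding Inv_def by simp
  have Ine: "?I \<noteq> {}" using IU unfolding Inv_def by blast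
  have tt: "t \<in> og_elts W" "t \<notin> ?I" "t \<notin> ?J" "og_elts W = ?I \<union> ?J \<union> {t}"
    using rw unfolding og_rewrite_via_def by simp_all
  have R: "RW W ?I ?J t ?n"
    by (rule RW.intro[OF OG.intro[OF ogs(3)] RW_axioms.intro[OF Ui.f_dclosed Vj.f_dclosed tt(1) tt(2) tt(3) tt(4)
          sI[symmetric] sJ[symmetric] Ine bd DtF DtT pureI pureJ GI GJ AI AJ]])
  interpret R: RW W ?I ?J t ?n using R .
  have ne: "og_elts W \<noteq> {}" using tt(1) by blast
  have G: "\<forall>a. Gr W a (og_elts W) (og_setdim W (og_elts W))" using R.Gr_Q by blast
  show ?thesis unfolding Inv_def using ogs(3) ne G R.AtR_Q by blast
qed

lemma regmol_Inv: "regmol X \<Longrightarrow> Inv X"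
proof (induction rule: regmol.induct)
  case (point P) then show ?case by (rule Inv_point)
next
  case (iso P Q f) then show ?case by (intro Inv_iso[of P Q f])
next
  case (paste U V k W i j) then show ?case by (intro Inv_paste[of U V k W i j])
next
  case (rewrite U V W i j t) then show ?case by (intro Inv_rewrite[of U V W i j t])
qed

lemma flow_hasse: assumes I: "Inv X" and e: "(x,y) \<in> og_flow X k" shows "(x,y) \<in> (og_hasse X)\<^sup>+"
proof -
  have og: "ogpos X" using I by (simp add: Inv_def)
  interpret OG X using og by (simp add: OG_def)
  have xy: "x \<in> og_elts X" "y \<in> og_elts X" "og_dim X x > k" using e by (auto simp: og_flow_def)
  obtain z where z1: "z \<in> og_Dk X True k x" and z2: "z \<in> og_Dk X False k y"
    using e by (auto simp: og_flow_def)
  have zx: "z \<in> og_cl X {x}" "og_Nabla X False z \<inter> og_cl X {x} = {}" "og_dim X z = k"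
    using z1 by (auto simp: og_Dk_def og_Dn_def og_layer_def)
  have zy: "z \<in> og_cl X {y}" "og_Nabla X True z \<inter> og_cl X {y} = {}"
    using z2 by (auto simp: og_Dk_def og_Dn_def og_layer_def)
  have A: "AtR X (og_elts X)" using I by (simp add: Inv_def)
  have p1: "(x,z) \<in> (og_hasse X)\<^sup>*" using A xy zx unfolding AtR_def by blast
  have p2: "(z,y) \<in> (og_hasse X)\<^sup>*" using A xy zy unfolding AtR_def by blast
  have "x \<noteq> z" using zx xy by auto
  then have "(x,z) \<in> (og_hasse X)\<^sup>+" using p1 by (simp add: rtrancl_eq_or_trancl)
  then show ?thesis using p2 by (simp add: trancl_rtrancl_trancl)
qed

lemma part1: assumes "regmol U" "og_acyclic U" shows "og_dimwise_acyclic U"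
proof -
  have I: "Inv U" using regmol_Inv assms(1) .
  have "acyclic (og_flow U (int k))" for k
  proof -
    have "og_flow U (int k) \<subseteq> (og_hasse U)\<^sup>+"
    proof
      fix p assume "p \<in> og_flow U (int k)"
      then show "p \<in> (og_hasse U)\<^sup>+" using flow_hasse[OF I, of "fst p" "snd p"] by simp
    qed
    then have "(og_flow U (int k))\<^sup>+ \<subseteq> (og_hasse U)\<^sup>+"
      using trancl_mono_subset[of "og_flow U (int k)" "(og_hasse U)\<^sup>+"] trancl_id[OF trans_trancl] by simp
    then show ?thesis using assms(2) unfolding og_acyclic_def acyclic_def by blast
  qed
  then show ?thesis unfolding og_dimwise_acyclic_def by blast
qed

lemma incl_comp: assumes f: "og_inclusion A B f" and g: "og_inclusion B C g"
  shows "og_inclusion A C (g \<circ> f)"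
proof -
  have fe: "f ` og_elts A \<subseteq> og_elts B" using f by (simp add: og_inclusion_def og_map_def)
  have m: "og_map A C (g \<circ> f)"
    unfolding og_map_def
  proof (intro conjI ballI allI)
    show "(g \<circ> f) ` og_elts A \<subseteq> og_elts C" using fe g by (auto simp: og_inclusion_def og_map_def)
    fix x a n assume x: "x \<in> og_elts A"
    have "f ` og_bdry A a n (og_cl A {x}) = og_bdry B a n (og_cl B {f x})"
      using f x by (simp add: og_inclusion_def og_map_def)
    moreover have "g ` og_bdry B a n (og_cl B {f x}) = og_bdry C a n (og_cl C {g (f x)})"
    proof -
      have "f x \<in> og_elts B" using x fe by blast
      then show ?thesis using g unfolding og_inclusion_def og_map_def by blast
    qed
    moreover have "(g \<circ> f) ` og_bdry A a n (og_cl A {x}) = g ` (f ` og_bdry A a n (og_cl A {x}))"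
      by (rule image_comp[symmetric])
    ultimately show "(g \<circ> f) ` og_bdry A a n (og_cl A {x}) = og_bdry C a n (og_cl C {(g \<circ> f) x})"
      by simp
  qed
  have "inj_on (g \<circ> f) (og_elts A)"
    using f g fe by (auto simp: og_inclusion_def intro: comp_inj_on inj_on_subset)
  then show ?thesis using m by (simp add: og_inclusion_def)
qed

lemma subincl_props: "subincl f A B \<Longrightarrow> regmol A \<and> regmol B \<and> og_inclusion A B f"
proof (induction rule: subincl.induct)
  case (iso A B f) then show ?case
    unfolding og_iso_def og_inclusion_def bij_betw_def by blast
next
  case (pasteL U V W k i j) then show ?case by (simp add: og_paste_via_def)
next
  case (pasteR U V W k i j) then show ?case by (simp add: og_paste_via_def)
next
  case (comp f A B g C) then show ?case using incl_comp by blast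
qed

lemma part2: assumes U: "regmol U" and D: "og_dimwise_acyclic U" shows "og_frame_acyclic U"
  unfolding og_frame_acyclic_def
proof (intro allI impI)
  fix V assume sm: "og_submol V U"
  let ?R = "og_restrict U V"
  obtain g where g: "subincl g ?R U" "\<forall>x\<in>V. g x = x" using sm unfolding og_submol_def by blast
  have pr: "regmol ?R" "og_inclusion ?R U g" using subincl_props[OF g(1)] by auto
  have ogR: "ogpos ?R" using regmol_ogpos pr(1) .
  have ogU: "ogpos U" using regmol_ogpos U .
  interpret INCL ?R U g using ogR ogU pr(2) by (simp add: INCL_def INCL_axioms_def OG_def)
  have eR: "og_elts ?R = V" by (simp add: og_restrict_def)
  let ?k = "og_frdim ?R"
  have sub: "og_flow ?R ?k \<subseteq> og_flow U ?k"
  proof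
    fix p assume p: "p \<in> og_flow ?R ?k"
    obtain x y where xy: "p = (x,y)" by (cases p)
    have xe: "x \<in> og_elts ?R" and ye: "y \<in> og_elts ?R" and dx: "og_dim ?R x > ?k" and dy: "og_dim ?R y > ?k"
      using p xy by (auto simp: og_flow_def)
    obtain z where z1: "z \<in> og_Dk ?R True ?k x" and z2: "z \<in> og_Dk ?R False ?k y"
      using p xy by (auto simp: og_flow_def)
    have "g z \<in> og_Dk U True ?k (g x)"
      using z1 f_Dn[OF P.cl_sub[of "{x}"], of True ?k] f_cl1[OF xe] by (simp add: og_Dk_def)
    moreover have "g z \<in> og_Dk U False ?k (g y)"
      using z2 f_Dn[OF P.cl_sub[of "{y}"], of False ?k] f_cl1[OF ye] by (simp add: og_Dk_def)
    moreover have "g x = x" "g y = y" using g(2) xe ye eR by auto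
    ultimately show "p \<in> og_flow U ?k"
      using xy f_elts[OF xe] f_elts[OF ye] f_dim[OF xe] f_dim[OF ye] dx dy
      by (auto simp: og_flow_def)
  qed
  show "acyclic (og_mflow ?R ?k)"
  proof (cases "?k \<ge> 0")
    case True
    then have "?k = int (nat ?k)" by simp
    then have "acyclic (og_flow U ?k)" using D unfolding og_dimwise_acyclic_def by metis
    then have "acyclic (og_flow ?R ?k)" using sub acyclic_subset by blast
    then show ?thesis unfolding og_mflow_def using acyclic_subset by blast
  next
    case False
    have "og_flow ?R ?k = {}"
    proof -
      have "og_Dk ?R True ?k x = {}" for x
        using False P.dim_nonneg P.cl_sub by (force simp: og_Dk_def og_Dn_def og_layer_def)
      then show ?thesis by (auto simp: og_flow_def)
    qed
    then show ?thesis unfolding og_mflow_def by (simp add: acyclic_def)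
  qed
qed

theorem lemma3p39:
  fixes U :: "'a ogp"
  assumes "regmol U"
  shows "(og_acyclic U \<longrightarrow> og_dimwise_acyclic U) \<and> (og_dimwise_acyclic U \<longrightarrow> og_frame_acyclic U)"
  using part1 part2 assms by blast


end
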